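(* Let $n=3$ and let $M$ be a Griffiths positive $2\times 2$ matrix of constant coefficient $(1,1)$-forms on $\mathbb{C}^3$. Then $\Omega=\det(M)$ is a Lefschetz form for bidegree $(1,0)$, and $\Omega$ is a Hodge-Riemann form (with respect to any Kähler form $\omega$).
   Context: $V^{p,q}$ is the space of constant coefficient $(p,q)$-forms on $\mathbb{C}^n$; $V^{k,k}_{\mathbb{R}}$ is the set of real forms in $V^{k,k}$. A $(1,1)$-form is Kähler if it equals $\sum_l\frac{\sqrt{-1}}{2}dw_l\wedge d\overline{w_l}$ in some complex linear coordinates. A matrix $M=(\alpha_{i,j})$ of $(1,1)$-forms with $\alpha_{i,j}=\overline{\alpha_{j,i}}$ is Griffiths positive if $\sum_{i,j}\theta_i\alpha_{i,j}\overline{\theta_j}$ is Kähler for all nonzero $\theta$; $\det(M)=\alpha_{1,1}\wedge\alpha_{2,2}-\alpha_{1,2}\wedge\alpha_{2,1}$. $\Omega\in V^{k,k}$ is a Lefschetz form for bidegree $(p,q)$, $p+q=n-k$, if $\alpha\mapsto\alpha\wedge\Omega$ is an isomorphism $V^{p,q}\to V^{n-q,n-p}$. Given a Kähler form $\omega$, $\Omega\in V^{k,k}_{\mathbb{R}}$ is a Hodge-Riemann form if for every $(p,q)$ with $p,q\geqslant0$, $p+q=n-k$, there is a continuous path $\Omega_t\in V^{k,k}_{\mathbb{R}}$, $t\in[0,1]$, $\Omega_0=\Omega$, $\Omega_1=\omega^k$, with $\Omega_t\wedge\omega^{2r}$ a Lefschetz form for bidegree $(p-r,q-r)$ for all $0\leqslant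 r\leqslant\min\{p,q\}$, $t\in[0,1]$. *)

theory Defs
  imports Complex_Main
begin

text \<open>Generators of the exterior algebra are
  indexed by naturals: index j < n stands for dz_(j+1), index n + j (j < n) stands for
  dzbar_(j+1).  A form is given by its coefficients on the basis monomials e_S
  (wedge of the generators in S in increasing order), S a finite subset of {..<2n}.\<close>

type_synonym form = "nat set \<Rightarrow> complex"

definition V :: "nat \<Rightarrow> nat \<Rightarrow> nat \<Rightarrow> form set" where
  "V n p q = {f. \<forall>S. f S \<noteq> 0 \<longrightarrow>
      S \<subseteq> {..<2*n} \<and> card (S \<inter> {..<n}) = p \<and> card (S \<inter> {n..<2*n}) = q}"

definition wsign :: "nat set \<Rightarrow> nat set \<Rightarrow> complex" where
  "wsign A B = (-1) ^ card {(a, b). a \<in> A \<and> b \<in> B \<and> b < a}"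

definition wedge :: "form \<Rightarrow> form \<Rightarrow> form" where
  "wedge f g = (\<lambda>S. \<Sum>A\<in>Pow S. wsign A (S - A) * f A * g (S - A))"

definition unitf :: form where
  "unitf = (\<lambda>S. if S = {} then 1 else 0)"

primrec wpow :: "form \<Rightarrow> nat \<Rightarrow> form" where
  "wpow w 0 = unitf"
| "wpow w (Suc k) = wedge w (wpow w k)"

definition swapidx :: "nat \<Rightarrow> nat \<Rightarrow> nat" where
  "swapidx n i = (if i < n then i + n else if i < 2*n then i - n else i)"

text \<open>Complex conjugation: conj(a dz_I ^ dzbar_J) = cnj a dzbar_I ^ dz_J
  = (-1)^(|I||J|) cnj a dz_J ^ dzbar_I.\<close>
definition fconj :: "nat \<Rightarrow> form \<Rightarrow> form" where
  "fconj n f = (\<lambda>T. (-1) ^ (card (T \<inter> {..<n}) * card (T \<inter> {n..<2*n}))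
                        * cnj (f (swapidx n ` T)))"

definition VR :: "nat \<Rightarrow> nat \<Rightarrow> form set" where
  "VR n k = {f \<in> V n k k. fconj n f = f}"

definition holo1 :: "nat \<Rightarrow> (nat \<Rightarrow> complex) \<Rightarrow> form" where
  "holo1 n a = (\<lambda>S. if is_singleton S \<and> the_elem S < n then a (the_elem S) else 0)"

text \<open>Kaehler: omega = sum_l (i/2) dw_l ^ dwbar_l for complex linear coordinates
  w_l = sum_j A l j z_j with A an invertible n x n matrix.\<close>
definition Kahler :: "nat \<Rightarrow> form \<Rightarrow> bool" where
  "Kahler n w \<longleftrightarrow> (\<exists>A :: nat \<Rightarrow> nat \<Rightarrow> complex.
      (\<forall>c. (\<forall>j<n. (\<Sum>l<n. c l * A l j) = 0) \<longrightarrow> (\<forall>l<n. c l = 0)) \<and>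
      w = (\<lambda>S. \<Sum>l<n. (\<i> / 2) * wedge (holo1 n (A l)) (fconj n (holo1 n (A l))) S))"

definition GriffithsPos :: "nat \<Rightarrow> (nat \<Rightarrow> nat \<Rightarrow> form) \<Rightarrow> bool" where
  "GriffithsPos n M \<longleftrightarrow>
     (\<forall>i<2. \<forall>j<2. M i j \<in> V n 1 1 \<and> M i j = fconj n (M j i)) \<and>
     (\<forall>\<theta> :: nat \<Rightarrow> complex. (\<theta> 0 \<noteq> 0 \<or> \<theta> 1 \<noteq> 0) \<longrightarrow>
        Kahler n (\<lambda>S. \<Sum>i<2. \<Sum>j<2. \<theta> i * M i j S * cnj (\<theta> j)))"

definition det2 :: "(nat \<Rightarrow> nat \<Rightarrow> form) \<Rightarrow> form" where
  "det2 M = (\<lambda>S. wedge (M 0 0) (M 1 1) S - wedge (M 0 1) (M 1 0) S)"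

definition Lefschetz :: "nat \<Rightarrow> nat \<Rightarrow> nat \<Rightarrow> nat \<Rightarrow> form \<Rightarrow> bool" where
  "Lefschetz n k p q \<Omega> \<longleftrightarrow> \<Omega> \<in> V n k k \<and> p + q + k = n \<and>
     bij_betw (\<lambda>\<alpha>. wedge \<alpha> \<Omega>) (V n p q) (V n (n - q) (n - p))"

definition HodgeRiemann :: "nat \<Rightarrow> nat \<Rightarrow> form \<Rightarrow> form \<Rightarrow> bool" where
  "HodgeRiemann n k w \<Omega> \<longleftrightarrow> \<Omega> \<in> VR n k \<and>
     (\<forall>p q. p + q + k = n \<longrightarrow>
        (\<exists>\<gamma> :: real \<Rightarrow> form.
           (\<forall>S. continuous_on {0..1} (\<lambda>t. \<gamma> t S)) \<and>
           \<gamma> 0 = \<Omega> \<and> \<gamma> 1 = wpow w k \<and>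
           (\<forall>t\<in>{0..1}. \<gamma> t \<in> VR n k \<and>
              (\<forall>r \<le> min p q. Lefschetz n (k + 2*r) (p - r) (q - r) (wedge (\<gamma> t) (wpow w (2*r)))))))"

end

theory Submission
  imports Defs
begin

definition E :: "nat set \<Rightarrow> form" where "E T = (\<lambda>S. if S = T then 1 else 0)"

lemma set3: "{..<(3::nat)} = {0,1,2}" by auto
lemma sum3: "(\<Sum>a<(3::nat). f a) = f 0 + f 1 + f 2"
  by (simp add: set3 add.assoc)
lemma set2: "{..<(2::nat)} = {0,1}" by auto
lemma sum2: "(\<Sum>a<(2::nat). f a) = f 0 + f 1"
  by (simp add: set2)

lemma wsign_alt:
  assumes "finite A" "finite B"
  shows "wsign A B = (-1) ^ (\<Sum>a\<in>A. \<Sum>b\<in>B. if b < a then 1 else 0 :: nat)"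
proof -
  have "{(a, b). a \<in> A \<and> b \<in> B \<and> b < a} = Sigma A (\<lambda>a. {b\<in>B. b < a})" by auto
  then have "card {(a, b). a \<in> A \<and> b \<in> B \<and> b < a} = (\<Sum>a\<in>A. card {b\<in>B. b < a})"
    using assms by (simp add: card_SigmaI)
  also have "\<dots> = (\<Sum>a\<in>A. \<Sum>b\<in>B. if b < a then 1 else 0 :: nat)"
    using assms by (simp add: sum.If_cases Int_def)
  finally show ?thesis unfolding wsign_def by simp
qed

lemma wedge_E:
  "wedge (E A) (E B) S = (if finite S \<and> S = A \<union> B \<and> A \<inter> B = {} then wsign A B else 0)"
proof (cases "finite S")
  case False
  then have "infinite (Pow S)" by simp
  then show ?thesis using False unfolding wedge_def by simp
next
  case True
  have "wedge (E A) (E B) S = (\<Sum>X\<in>Pow S. if X = A then (if S - A = B then wsign A B else 0) else 0)"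
    unfolding wedge_def E_def by (rule sum.cong) auto
  also have "\<dots> = (if A \<in> Pow S then (if S - A = B then wsign A B else 0) else 0)"
    using True by (simp add: sum.delta')
  also have "\<dots> = (if S = A \<union> B \<and> A \<inter> B = {} then wsign A B else 0)"
    by auto
  finally show ?thesis using True by simp
qed

lemma wedge_E_fun:
  "wedge (E A) (E B) = (\<lambda>S. if finite (A \<union> B) \<and> A \<inter> B = {} then wsign A B * E (A \<union> B) S else 0)"
  apply (rule ext) apply (simp only: wedge_E) by (auto simp: E_def)

lemma wedge_sum_left:
  assumes "finite I"
  shows "wedge (\<lambda>S. \<Sum>i\<in>I. F i S) g = (\<lambda>S. \<Sum>i\<in>I. wedge (F i) g S)"
  unfolding wedge_def
  by (rule ext) (simp add: sum_distrib_left sum_distrib_right sum.swap[of _ I] algebra_simps)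

lemma wedge_sum_right:
  assumes "finite I"
  shows "wedge f (\<lambda>S. \<Sum>i\<in>I. F i S) = (\<lambda>S. \<Sum>i\<in>I. wedge f (F i) S)"
  unfolding wedge_def
  by (rule ext) (simp add: sum_distrib_left sum_distrib_right sum.swap[of _ I] algebra_simps)

lemma wedge_scale_left: "wedge (\<lambda>S. c * f S) g = (\<lambda>S. c * wedge f g S)"
  unfolding wedge_def by (rule ext) (simp add: sum_distrib_left algebra_simps)

lemma wedge_scale_right: "wedge f (\<lambda>S. c * g S) = (\<lambda>S. c * wedge f g S)"
  unfolding wedge_def by (rule ext) (simp add: sum_distrib_left algebra_simps)

lemma wedge_unit:
  assumes "\<And>S. infinite S \<Longrightarrow> f S = 0"
  shows "wedge f unitf = f"
proof (rule ext)
  fix S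
  show "wedge f unitf S = f S"
  proof (cases "finite S")
    case False
    then have "infinite (Pow S)" by simp
    then show ?thesis using False assms unfolding wedge_def by simp
  next
    case True
    have "wedge f unitf S = (\<Sum>X\<in>Pow S. if X = S then wsign S {} * f S else 0)"
      unfolding wedge_def unitf_def by (rule sum.cong) auto
    also have "\<dots> = f S" using True by (simp add: wsign_def)
    finally show ?thesis .
  qed
qed

lemma comb_at:
  assumes "finite I" "inj_on T I" "i0 \<in> I"
  shows "(\<Sum>i\<in>I. c i * E (T i) (T i0)) = c i0"
proof -
  have "(\<Sum>i\<in>I. c i * E (T i) (T i0)) = (\<Sum>i\<in>I. if i = i0 then c i else 0)"
    using assms by (intro sum.cong) (auto simp: E_def inj_on_def)
  then show ?thesis using assms by simp
qed

lemma comb_rep: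
  assumes "finite I" "inj_on T I" "\<And>S. f S \<noteq> 0 \<Longrightarrow> S \<in> T ` I"
  shows "f = (\<lambda>S. \<Sum>i\<in>I. f (T i) * E (T i) S)"
proof (rule ext)
  fix S
  show "f S = (\<Sum>i\<in>I. f (T i) * E (T i) S)"
  proof (cases "S \<in> T ` I")
    case True
    then obtain i0 where "i0 \<in> I" "S = T i0" by auto
    then show ?thesis using comb_at[OF assms(1,2), of i0 "\<lambda>i. f (T i)"] by simp
  next
    case False
    then have "f S = 0" using assms(3) by blast
    moreover have "(\<Sum>i\<in>I. f (T i) * E (T i) S) = 0"
      using False by (intro sum.neutral) (auto simp: E_def)
    ultimately show ?thesis by simp
  qed
qed

lemma comb_in_V:
  assumes "finite I" "\<And>i. i \<in> I \<Longrightarrow> T i \<subseteq> {..<2*n} \<and> card (T i \<inter> {..<n}) = p \<and> card (T i \<inter> {n..<2*n}) = q"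
  shows "(\<lambda>S. \<Sum>i\<in>I. c i * E (T i) S) \<in> V n p q"
  unfolding V_def
proof (intro CollectI allI impI)
  fix S assume "(\<Sum>i\<in>I. c i * E (T i) S) \<noteq> 0"
  then obtain i where "i \<in> I" "c i * E (T i) S \<noteq> 0" by (meson sum.neutral)
  then have "S = T i" by (auto simp: E_def split: if_splits)
  with assms(2)[OF \<open>i \<in> I\<close>] 
  show "S \<subseteq> {..<2*n} \<and> card (S \<inter> {..<n}) = p \<and> card (S \<inter> {n..<2*n}) = q" by auto
qed


definition p1 :: "nat \<Rightarrow> nat" where "p1 j = (if j = 0 then 1 else 0)"
definition p2 :: "nat \<Rightarrow> nat" where "p2 j = (if j = 2 then 1 else 2)"
definition Sjk :: "nat \<Rightarrow> nat \<Rightarrow> nat set" where "Sjk j k = {p1 j, p2 j, 3 + p1 k, 3 + p2 k}"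
definition Tk :: "nat \<Rightarrow> nat set" where "Tk k = {0, 1, 2, 3 + p1 k, 3 + p2 k}"
definition Tj :: "nat \<Rightarrow> nat set" where "Tj j = {p1 j, p2 j, 3, 4, 5}"

lemma less3: "x < (3::nat) \<Longrightarrow> x = 0 \<or> x = 1 \<or> x = 2" by auto

lemma wE11:
  assumes "a < 3" "b < 3" "a' < 3" "b' < 3"
  shows "wedge (E {a, 3+b}) (E {a', 3+b'}) = (\<lambda>S. if a \<noteq> a' \<and> b \<noteq> b' then
     - ((if a' < a then -1 else 1) * (if b' < b then -1 else 1)) * E (Sjk (3-a-a') (3-b-b')) S else 0)"
proof -
  have int: "({a,3+b} \<inter> {a',3+b'} = {}) \<longleftrightarrow> (a \<noteq> a' \<and> b \<noteq> b')" using assms by auto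
  have un: "{a,3+b} \<union> {a',3+b'} = Sjk (3-a-a') (3-b-b')" if "a \<noteq> a'" "b \<noteq> b'"
    using less3[OF assms(1)] less3[OF assms(3)] less3[OF assms(2)] less3[OF assms(4)] that
    unfolding Sjk_def p1_def p2_def
    by (elim disjE) (simp_all add: insert_commute)
  have ws: "wsign {a,3+b} {a',3+b'} = - ((if a' < a then -1 else 1) * (if b' < b then -1 else 1))"
    if "a \<noteq> a'" "b \<noteq> b'"
    using less3[OF assms(1)] less3[OF assms(3)] less3[OF assms(2)] less3[OF assms(4)] that
    by (elim disjE) (simp_all add: wsign_alt)
  show ?thesis unfolding wedge_E_fun using int un ws by auto
qed

lemma wE1S:
  assumes "p < 3" "j < 3" "k < 3"
  shows "wedge (E {p}) (E (Sjk j k)) = (\<lambda>S. if p = j then (-1)^j * E (Tk k) S else 0)"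
proof -
  have int: "({p} \<inter> Sjk j k = {}) \<longleftrightarrow> p = j"
    using less3[OF assms(1)] less3[OF assms(2)] less3[OF assms(3)]
    unfolding Sjk_def p1_def p2_def by (elim disjE) simp_all
  have un: "{j} \<union> Sjk j k = Tk k"
    using less3[OF assms(2)] less3[OF assms(3)]
    unfolding Sjk_def Tk_def p1_def p2_def by (elim disjE) (simp_all add: insert_commute)
  have ws: "wsign {j} (Sjk j k) = (-1)^j"
    using less3[OF assms(2)] less3[OF assms(3)]
    unfolding Sjk_def p1_def p2_def by (elim disjE) (simp_all add: wsign_alt)
  have fin: "finite (Sjk j k)" by (simp add: Sjk_def)
  show ?thesis unfolding wedge_E_fun using int un ws fin by auto
qed

lemma wE1S':
  assumes "q < 3" "j < 3" "k < 3"
  shows "wedge (E {3+q}) (E (Sjk j k)) = (\<lambda>S. if q = k then (-1)^k * E (Tj j) S else 0)"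
proof -
  have int: "({3+q} \<inter> Sjk j k = {}) \<longleftrightarrow> q = k"
    using less3[OF assms(1)] less3[OF assms(2)] less3[OF assms(3)]
    unfolding Sjk_def p1_def p2_def by (elim disjE) simp_all
  have un: "{3+k} \<union> Sjk j k = Tj j"
    using less3[OF assms(2)] less3[OF assms(3)]
    unfolding Sjk_def Tj_def p1_def p2_def by (elim disjE) (simp_all add: insert_commute)
  have ws: "wsign {3+k} (Sjk j k) = (-1)^k"
    using less3[OF assms(2)] less3[OF assms(3)]
    unfolding Sjk_def p1_def p2_def by (elim disjE) (simp_all add: wsign_alt)
  have fin: "finite (Sjk j k)" by (simp add: Sjk_def)
  show ?thesis unfolding wedge_E_fun using int un ws fin by auto
qed

lemma wE1b:
  assumes "p < 3" "q < 3"
  shows "wedge (E {p}) (E {3+q}) = E {p, 3+q}"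
proof -
  have ws: "wsign {p} {3+q} = 1"
    using assms by (simp add: wsign_alt)
  show ?thesis unfolding wedge_E_fun using assms ws by (auto simp: insert_commute)
qed

lemma Sjk_inj: "j < 3 \<Longrightarrow> k < 3 \<Longrightarrow> j' < 3 \<Longrightarrow> k' < 3 \<Longrightarrow> Sjk j k = Sjk j' k' \<longleftrightarrow> j = j' \<and> k = k'"
proof
  assume a: "j < 3" "k < 3" "j' < 3" "k' < 3" and e: "Sjk j k = Sjk j' k'"
  have "j \<notin> Sjk j k" "3 + k \<notin> Sjk j k"
    using less3[OF a(1)] less3[OF a(2)] unfolding Sjk_def p1_def p2_def by (elim disjE; simp)+
  moreover have "j \<noteq> j' \<Longrightarrow> j \<in> Sjk j' k'" "k \<noteq> k' \<Longrightarrow> 3 + k \<in> Sjk j' k'"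
    using less3[OF a(1)] less3[OF a(2)] less3[OF a(3)] less3[OF a(4)]
    unfolding Sjk_def p1_def p2_def by (elim disjE; simp)+
  ultimately show "j = j' \<and> k = k'" using e by auto
qed simp

lemma Tk_inj: "k < 3 \<Longrightarrow> k' < 3 \<Longrightarrow> Tk k = Tk k' \<longleftrightarrow> k = k'"
proof
  assume a: "k < 3" "k' < 3" and e: "Tk k = Tk k'"
  have "3 + k \<notin> Tk k"
    using less3[OF a(1)] unfolding Tk_def p1_def p2_def by (elim disjE; simp)+
  moreover have "k \<noteq> k' \<Longrightarrow> 3 + k \<in> Tk k'"
    using less3[OF a(1)] less3[OF a(2)]
    unfolding Tk_def p1_def p2_def by (elim disjE; simp)+
  ultimately show "k = k'" using e by auto
qed simp

lemma Tj_inj: "k < 3 \<Longrightarrow> k' < 3 \<Longrightarrow> Tj k = Tj k' \<longleftrightarrow> k = k'"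
proof
  assume a: "k < 3" "k' < 3" and e: "Tj k = Tj k'"
  have "k \<notin> Tj k"
    using less3[OF a(1)] unfolding Tj_def p1_def p2_def by (elim disjE; simp)+
  moreover have "k \<noteq> k' \<Longrightarrow> k \<in> Tj k'"
    using less3[OF a(1)] less3[OF a(2)]
    unfolding Tj_def p1_def p2_def by (elim disjE; simp)+
  ultimately show "k = k'" using e by auto
qed simp

lemma card_Sjk: "j < 3 \<Longrightarrow> k < 3 \<Longrightarrow> Sjk j k \<subseteq> {..<2*3} \<and> card (Sjk j k \<inter> {..<3}) = 2 \<and> card (Sjk j k \<inter> {3..<2*3}) = 2"
  by (elim less3[elim_format] disjE) (simp_all add: Sjk_def p1_def p2_def)
lemma card_Tk: "k < 3 \<Longrightarrow> Tk k \<subseteq> {..<2*3} \<and> card (Tk k \<inter> {..<3}) = 3 \<and> card (Tk k \<inter> {3..<2*3}) = 2"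
  by (elim less3[elim_format] disjE) (simp_all add: Tk_def p1_def p2_def)
lemma card_Tj: "k < 3 \<Longrightarrow> Tj k \<subseteq> {..<2*3} \<and> card (Tj k \<inter> {..<3}) = 2 \<and> card (Tj k \<inter> {3..<2*3}) = 3"
  by (elim less3[elim_format] disjE) (simp_all add: Tj_def p1_def p2_def)


lemma sub1: "L \<subseteq> A \<Longrightarrow> card L = 1 \<Longrightarrow> \<exists>a\<in>A. L = {a}"
  by (auto simp: card_1_singleton_iff)

lemma subAll: "L \<subseteq> A \<Longrightarrow> finite A \<Longrightarrow> card L = card A \<Longrightarrow> L = A"
  using card_subset_eq by blast

lemma subMinus1:
  assumes "L \<subseteq> A" "finite A" "card L + 1 = card A"
  shows "\<exists>x\<in>A. L = A - {x}"
proof -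
  have "L \<noteq> A" using assms by auto
  then obtain x where x: "x \<in> A" "x \<notin> L" using assms(1) by blast
  then have "L \<subseteq> A - {x}" using assms(1) by auto
  moreover have "card (A - {x}) = card L" using assms x by simp
  ultimately have "L = A - {x}" using assms(2) by (metis card_subset_eq finite_Diff)
  then show ?thesis using x by blast
qed

lemma supp:
  assumes "f \<in> V 3 p q" "f S \<noteq> 0"
  obtains L H where "S = L \<union> H" "L \<subseteq> {0,1,2}" "H \<subseteq> {3,4,5}" "card L = p" "card H = q"
proof -
  have S: "S \<subseteq> {..<6}" "card (S \<inter> {..<3}) = p" "card (S \<inter> {3..<6}) = q"
    using assms unfolding V_def by auto
  have "S = (S \<inter> {..<3}) \<union> (S \<inter> {3..<6})" using S(1) by auto
  moreover have "{..<3::nat} = {0,1,2}" "{3..<6::nat} = {3,4,5}" by auto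
  ultimately show ?thesis using that S by (metis inf_le2)
qed


lemma supp10:
  assumes "f \<in> V 3 1 0" "f S \<noteq> 0"
  shows "S \<in> (\<lambda>p. {p}) ` {..<3}"
proof -
  obtain L H where *: "S = L \<union> H" "L \<subseteq> {0,1,2}" "H \<subseteq> {3,4,5}" "card L = 1" "card H = 0"
    using supp[OF assms] by blast
  have "H = {}" using *(3,5) by (simp add: finite_subset)
  moreover obtain a where "a \<in> {0,1,2}" "L = {a}" using sub1[OF *(2,4)] by blast
  ultimately show ?thesis using *(1) by auto
qed

lemma supp01:
  assumes "f \<in> V 3 0 1" "f S \<noteq> 0"
  shows "S \<in> (\<lambda>q. {3+q}) ` {..<3}"
proof -
  obtain L H where *: "S = L \<union> H" "L \<subseteq> {0,1,2}" "H \<subseteq> {3,4,5}" "card L = 0" "card H = 1"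
    using supp[OF assms] by blast
  have "L = {}" using *(2,4) by (simp add: finite_subset)
  moreover obtain a where "a \<in> {3,4,5}" "H = {a}" using sub1[OF *(3,5)] by blast
  ultimately show ?thesis using *(1) by (auto simp: image_iff intro: bexI[of _ "a - 3"])
qed

lemma supp11:
  assumes "f \<in> V 3 1 1" "f S \<noteq> 0"
  shows "S \<in> (\<lambda>(a,b). {a,3+b}) ` ({..<3} \<times> {..<3})"
proof -
  obtain L H where *: "S = L \<union> H" "L \<subseteq> {0,1,2}" "H \<subseteq> {3,4,5}" "card L = 1" "card H = 1"
    using supp[OF assms] by blast
  obtain a where a: "a \<in> {0,1,2}" "L = {a}" using sub1[OF *(2,4)] by blast
  obtain b where b: "b \<in> {3,4,5}" "H = {b}" using sub1[OF *(3,5)] by blast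
  have "S = {a, 3 + (b - 3)}" using a b *(1) by auto
  then show ?thesis using a b by (intro image_eqI[of _ _ "(a, b - 3)"]) auto
qed


lemma supp32:
  assumes "f \<in> V 3 3 2" "f S \<noteq> 0"
  shows "S \<in> Tk ` {..<3}"
proof -
  obtain L H where *: "S = L \<union> H" "L \<subseteq> {0,1,2}" "H \<subseteq> {3,4,5}" "card L = 3" "card H = 2"
    using supp[OF assms] by blast
  have L: "L = {0,1,2}" using subAll[OF *(2)] *(4) by simp
  have "\<exists>x\<in>{3,4,5}. H = {3,4,5} - {x}" using subMinus1[OF *(3)] *(5) by simp
  then obtain x where x: "x \<in> {3,4,5}" "H = {3,4,5} - {x}" by blast
  have "x = 3 \<or> x = 4 \<or> x = 5" using x(1) by simp
  then show ?thesis unfolding *(1) L x(2) 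
    apply (elim disjE)
    subgoal by (rule image_eqI[of _ _ 0]) (auto simp: Tk_def p1_def p2_def)
    subgoal by (rule image_eqI[of _ _ 1]) (auto simp: Tk_def p1_def p2_def)
    subgoal by (rule image_eqI[of _ _ 2]) (auto simp: Tk_def p1_def p2_def)
    done
qed
lemma supp23:
  assumes "f \<in> V 3 2 3" "f S \<noteq> 0"
  shows "S \<in> Tj ` {..<3}"
proof -
  obtain L H where *: "S = L \<union> H" "L \<subseteq> {0,1,2}" "H \<subseteq> {3,4,5}" "card L = 2" "card H = 3"
    using supp[OF assms] by blast
  have H: "H = {3,4,5}" using subAll[OF *(3)] *(5) by simp
  have "\<exists>x\<in>{0,1,2}. L = {0,1,2} - {x}" using subMinus1[OF *(2)] *(4) by simp
  then obtain x where x: "x \<in> {0,1,2}" "L = {0,1,2} - {x}" by blast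
  have "x = 0 \<or> x = 1 \<or> x = 2" using x(1) by simp
  then show ?thesis unfolding *(1) H x(2) 
    apply (elim disjE)
    subgoal by (rule image_eqI[of _ _ 0]) (auto simp: Tj_def p1_def p2_def)
    subgoal by (rule image_eqI[of _ _ 1]) (auto simp: Tj_def p1_def p2_def)
    subgoal by (rule image_eqI[of _ _ 2]) (auto simp: Tj_def p1_def p2_def)
    done
qed

definition mk11 :: "(nat \<Rightarrow> nat \<Rightarrow> complex) \<Rightarrow> form" where
  "mk11 X = (\<lambda>S. \<Sum>a<3. \<Sum>b<3. (\<i>/2 * X a b) * E {a, 3+b} S)"
definition mk22 :: "(nat \<Rightarrow> nat \<Rightarrow> complex) \<Rightarrow> form" where
  "mk22 K = (\<lambda>S. \<Sum>j<3. \<Sum>k<3. (K j k / 4) * E (Sjk j k) S)"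
definition Gm :: "(nat \<Rightarrow> nat \<Rightarrow> complex) \<Rightarrow> (nat \<Rightarrow> nat \<Rightarrow> complex) \<Rightarrow> nat \<Rightarrow> nat \<Rightarrow> complex" where
  "Gm X Y j k = X (p1 j) (p1 k) * Y (p2 j) (p2 k) + X (p2 j) (p2 k) * Y (p1 j) (p1 k)
     - X (p1 j) (p2 k) * Y (p2 j) (p1 k) - X (p2 j) (p1 k) * Y (p1 j) (p2 k)"
definition Kmat :: "(nat \<Rightarrow> nat \<Rightarrow> nat \<Rightarrow> nat \<Rightarrow> complex) \<Rightarrow> nat \<Rightarrow> nat \<Rightarrow> complex" where
  "Kmat H j k = Gm (H 0 0) (H 1 1) j k - Gm (H 0 1) (H 1 0) j k"

lemma lt3: "(0::nat) < 3 = True" "(1::nat) < 3 = True" "(2::nat) < 3 = True" by simp_all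

lemma wedge_mk11: "wedge (mk11 X) (mk11 Y) = mk22 (Gm X Y)"
  unfolding mk11_def mk22_def
  apply (simp only: wedge_sum_left[OF finite_lessThan] wedge_sum_right[OF finite_lessThan] wedge_scale_left wedge_scale_right)
  apply (simp only: sum3)
  apply (simp only: wE11 lt3)
  apply (simp add: Gm_def p1_def p2_def)
  apply (rule ext)
  apply (simp add: field_simps)
  done

lemma det2_mk11: "det2 (\<lambda>i j. mk11 (H i j)) = mk22 (Kmat H)"
  unfolding det2_def wedge_mk11 mk22_def Kmat_def
  by (rule ext) (simp add: sum_subtractf[symmetric] algebra_simps diff_divide_distrib)


lemma comb2_at:
  assumes "finite A" "finite B" "inj_on (\<lambda>(a,b). T a b) (A \<times> B)" "a0 \<in> A" "b0 \<in> B"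
  shows "(\<Sum>a\<in>A. \<Sum>b\<in>B. c a b * E (T a b) (T a0 b0)) = c a0 b0"
proof -
  have "(\<Sum>a\<in>A. \<Sum>b\<in>B. c a b * E (T a b) (T a0 b0)) = (\<Sum>a\<in>A. \<Sum>b\<in>B. if a = a0 \<and> b = b0 then c a b else 0)"
    apply (intro sum.cong refl)
    using assms(3-5) unfolding inj_on_def E_def by auto
  also have "\<dots> = (\<Sum>a\<in>A. if a = a0 then c a b0 else 0)"
    by (intro sum.cong refl) (use assms in auto)
  also have "\<dots> = c a0 b0" using assms by simp
  finally show ?thesis .
qed

lemma inj11: "inj_on (\<lambda>(a,b). {a, 3 + b::nat}) ({..<3} \<times> {..<3})"
  unfolding inj_on_def by (auto simp: doubleton_eq_iff)

lemma injS: "inj_on (\<lambda>(j,k). Sjk j k) ({..<3} \<times> {..<3})"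
  unfolding inj_on_def using Sjk_inj by auto

lemma mk11_at: "a < 3 \<Longrightarrow> b < 3 \<Longrightarrow> mk11 X {a, 3+b} = \<i>/2 * X a b"
  unfolding mk11_def
  using comb2_at[where T="\<lambda>a b. {a, 3+b}" and A="{..<3}" and B="{..<3}", OF _ _ inj11, of a b "\<lambda>a b. \<i>/2 * X a b"] by simp

lemma mk22_at: "j < 3 \<Longrightarrow> k < 3 \<Longrightarrow> mk22 K (Sjk j k) = K j k / 4"
  unfolding mk22_def
  using comb2_at[where T="Sjk" and A="{..<3}" and B="{..<3}", OF _ _ injS, of j k "\<lambda>j k. K j k / 4"] by simp

lemma mk22_inf: "infinite S \<Longrightarrow> mk22 K S = 0"
proof -
  assume "infinite S"
  then have "\<And>j k. S \<noteq> Sjk j k" by (auto simp: Sjk_def)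
  then show ?thesis unfolding mk22_def E_def by simp
qed

lemma mk22_in_V: "mk22 K \<in> V 3 2 2"
  unfolding V_def
proof (intro CollectI allI impI)
  fix S assume "mk22 K S \<noteq> 0"
  then obtain j k where "j < 3" "k < 3" "K j k / 4 * E (Sjk j k) S \<noteq> 0"
    unfolding mk22_def by (meson lessThan_iff sum.neutral)
  then have "S = Sjk j k" "j < 3" "k < 3" by (auto simp: E_def split: if_splits)
  then show "S \<subseteq> {..<2*3} \<and> card (S \<inter> {..<3}) = 2 \<and> card (S \<inter> {3..<2*3}) = 2"
    using card_Sjk by simp
qed

lemma rep11:
  assumes "f \<in> V 3 1 1"
  shows "f = mk11 (\<lambda>a b. - 2 * \<i> * f {a, 3+b})"
proof -
  have "f = (\<lambda>S. \<Sum>i\<in>{..<3} \<times> {..<3}. f ((\<lambda>(a,b). {a, 3+b}) i) * E ((\<lambda>(a,b). {a, 3+b}) i) S)"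
    by (rule comb_rep[OF _ inj11]) (use supp11[OF assms] in auto)
  also have "\<dots> = mk11 (\<lambda>a b. - 2 * \<i> * f {a, 3+b})"
    unfolding mk11_def
    by (rule ext) (simp add: sum.cartesian_product split_beta)
  finally show ?thesis .
qed

lemma rep10:
  assumes "f \<in> V 3 1 0"
  shows "f = (\<lambda>S. \<Sum>p<3. f {p} * E {p} S)"
  by (rule comb_rep[where T="\<lambda>p. {p}"]) (use supp10[OF assms] in auto)

lemma rep01:
  assumes "f \<in> V 3 0 1"
  shows "f = (\<lambda>S. \<Sum>q<3. f {3+q} * E {3+q} S)"
  by (rule comb_rep[where T="\<lambda>q. {3+q}"]) (use supp01[OF assms] in \<open>auto simp: inj_on_def\<close>)

lemma rep32:
  assumes "f \<in> V 3 3 2"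
  shows "f = (\<lambda>S. \<Sum>k<3. f (Tk k) * E (Tk k) S)"
  by (rule comb_rep[where T="Tk"]) (use supp32[OF assms] Tk_inj in \<open>auto simp: inj_on_def\<close>)

lemma rep23:
  assumes "f \<in> V 3 2 3"
  shows "f = (\<lambda>S. \<Sum>k<3. f (Tj k) * E (Tj k) S)"
  by (rule comb_rep[where T="Tj"]) (use supp23[OF assms] Tj_inj in \<open>auto simp: inj_on_def\<close>)


definition det3 :: "(nat \<Rightarrow> nat \<Rightarrow> complex) \<Rightarrow> complex" where
  "det3 N = N 0 0 * (N 1 1 * N 2 2 - N 1 2 * N 2 1) - N 0 1 * (N 1 0 * N 2 2 - N 1 2 * N 2 0)
          + N 0 2 * (N 1 0 * N 2 1 - N 1 1 * N 2 0)"

definition vec3 :: "complex \<Rightarrow> complex \<Rightarrow> complex \<Rightarrow> nat \<Rightarrow> complex" where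
  "vec3 x y z = (\<lambda>i. if i = 0 then x else if i = 1 then y else z)"

lemma vec3_simps [simp]: "vec3 x y z 0 = x" "vec3 x y z 1 = y" "vec3 x y z (Suc 0) = y" "vec3 x y z 2 = z"
  by (simp_all add: vec3_def)

lemma all3: "(\<forall>m<(3::nat). P m) \<longleftrightarrow> P 0 \<and> P 1 \<and> P 2"
proof (intro iffI)
  assume "\<forall>m<3. P m" then show "P 0 \<and> P 1 \<and> P 2" by simp
next
  assume "P 0 \<and> P 1 \<and> P 2" then show "\<forall>m<3. P m" using less3 by blast
qed

lemma sum3_vec: "(\<Sum>j<3. N m j * vec3 x y z j) = N m 0 * x + N m 1 * y + N m 2 * z"
  by (simp add: sum3)

lemma inj_det3:
  fixes N :: "nat \<Rightarrow> nat \<Rightarrow> complex"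
  assumes inj: "\<And>c. (\<forall>m<3. (\<Sum>j<3. N m j * c j) = 0) \<Longrightarrow> (\<forall>j<3. c j = 0)"
  shows "det3 N \<noteq> 0"
proof
  assume d: "det3 N = 0"
  have K: "x = 0 \<and> y = 0 \<and> z = 0" if "N 0 0 * x + N 0 1 * y + N 0 2 * z = 0"
     "N 1 0 * x + N 1 1 * y + N 1 2 * z = 0" "N 2 0 * x + N 2 1 * y + N 2 2 * z = 0" for x y z
    using inj[of "vec3 x y z"] that unfolding all3 sum3_vec by simp
  have c1: "N 1 1 * N 2 2 - N 1 2 * N 2 1 = 0 \<and> N 1 2 * N 2 0 - N 1 0 * N 2 2 = 0 \<and> N 1 0 * N 2 1 - N 1 1 * N 2 0 = 0"
    by (rule K) (algebra | use d[unfolded det3_def] in algebra)+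
  have c2: "N 2 1 * N 0 2 - N 2 2 * N 0 1 = 0 \<and> N 2 2 * N 0 0 - N 2 0 * N 0 2 = 0 \<and> N 2 0 * N 0 1 - N 2 1 * N 0 0 = 0"
    by (rule K) (algebra | use d[unfolded det3_def] in algebra)+
  have c3: "N 0 1 * N 1 2 - N 0 2 * N 1 1 = 0 \<and> N 0 2 * N 1 0 - N 0 0 * N 1 2 = 0 \<and> N 0 0 * N 1 1 - N 0 1 * N 1 0 = 0"
    by (rule K) (algebra | use d[unfolded det3_def] in algebra)+
  have r: "N i 1 = 0 \<and> N i 0 = 0 \<and> N i 2 = 0" if "i = 0 \<or> i = 1 \<or> i = 2" for i
  proof -
    have a: "N i 1 = 0 \<and> - N i 0 = 0 \<and> 0 = (0::complex)"
      by (rule K) (use c1 c2 c3 that in \<open>auto simp: algebra_simps\<close>)+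
    have b: "N i 2 = 0 \<and> 0 = (0::complex) \<and> - N i 0 = 0"
      by (rule K) (use c1 c2 c3 that in \<open>auto simp: algebra_simps\<close>)+
    show ?thesis using a b by simp
  qed
  have "(1::complex) = 0 \<and> (0::complex) = 0 \<and> (0::complex) = 0"
    by (rule K) (use r in simp)+
  then show False by simp
qed

lemma inj_surj3:
  fixes N :: "nat \<Rightarrow> nat \<Rightarrow> complex" and b :: "nat \<Rightarrow> complex"
  assumes inj: "\<And>c. (\<forall>m<3. (\<Sum>j<3. N m j * c j) = 0) \<Longrightarrow> (\<forall>j<3. c j = 0)"
  shows "\<exists>c. \<forall>m<3. (\<Sum>j<3. N m j * c j) = b m"
proof -
  have d: "det3 N \<noteq> 0" by (rule inj_det3[OF inj])
  define X0 where "X0 = (N 1 1 * N 2 2 - N 1 2 * N 2 1) * b 0 + (N 0 2 * N 2 1 - N 0 1 * N 2 2) * b 1 + (N 0 1 * N 1 2 - N 0 2 * N 1 1) * b 2"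
  define X1 where "X1 = (N 1 2 * N 2 0 - N 1 0 * N 2 2) * b 0 + (N 0 0 * N 2 2 - N 0 2 * N 2 0) * b 1 + (N 0 2 * N 1 0 - N 0 0 * N 1 2) * b 2"
  define X2 where "X2 = (N 1 0 * N 2 1 - N 1 1 * N 2 0) * b 0 + (N 0 1 * N 2 0 - N 0 0 * N 2 1) * b 1 + (N 0 0 * N 1 1 - N 0 1 * N 1 0) * b 2"
  have e0: "N 0 0 * X0 + N 0 1 * X1 + N 0 2 * X2 = det3 N * b 0"
    unfolding X0_def X1_def X2_def det3_def by algebra
  have e1: "N 1 0 * X0 + N 1 1 * X1 + N 1 2 * X2 = det3 N * b 1"
    unfolding X0_def X1_def X2_def det3_def by algebra
  have e2: "N 2 0 * X0 + N 2 1 * X1 + N 2 2 * X2 = det3 N * b 2"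
    unfolding X0_def X1_def X2_def det3_def by algebra
  have e: "N m 0 * X0 + N m 1 * X1 + N m 2 * X2 = det3 N * b m" if "m < 3" for m
    using less3[OF that] e0 e1 e2 by auto
  have "\<forall>m<3. (\<Sum>j<3. N m j * vec3 (X0 / det3 N) (X1 / det3 N) (X2 / det3 N) j) = b m"
  proof (intro allI impI)
    fix m :: nat assume m: "m < 3"
    have "(\<Sum>j<3. N m j * vec3 (X0 / det3 N) (X1 / det3 N) (X2 / det3 N) j)
        = (N m 0 * X0 + N m 1 * X1 + N m 2 * X2) / det3 N"
      unfolding sum3_vec by (simp add: add_divide_distrib)
    also have "\<dots> = b m" using e[OF m] d by simp
    finally show "(\<Sum>j<3. N m j * vec3 (X0 / det3 N) (X1 / det3 N) (X2 / det3 N) j) = b m" .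
  qed
  then show ?thesis by blast
qed


definition L10 :: "(nat \<Rightarrow> nat \<Rightarrow> complex) \<Rightarrow> (nat \<Rightarrow> complex) \<Rightarrow> nat \<Rightarrow> complex" where
  "L10 K c k = (\<Sum>j<3. (-1)^j * c j * K j k) / 4"
definition L01 :: "(nat \<Rightarrow> nat \<Rightarrow> complex) \<Rightarrow> (nat \<Rightarrow> complex) \<Rightarrow> nat \<Rightarrow> complex" where
  "L01 K c j = (\<Sum>k<3. (-1)^k * c k * K j k) / 4"

lemma wedge10: "wedge (\<lambda>S. \<Sum>p<3. c p * E {p} S) (mk22 K) = (\<lambda>S. \<Sum>k<3. L10 K c k * E (Tk k) S)"
  unfolding mk22_def
  apply (simp only: wedge_sum_left[OF finite_lessThan] wedge_sum_right[OF finite_lessThan] wedge_scale_left wedge_scale_right)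
  apply (simp only: sum3)
  apply (simp only: wE1S lt3)
  apply (simp add: L10_def sum3)
  apply (rule ext)
  apply (simp add: field_simps)
  done

lemma wedge01: "wedge (\<lambda>S. \<Sum>q<3. c q * E {3+q} S) (mk22 K) = (\<lambda>S. \<Sum>j<3. L01 K c j * E (Tj j) S)"
  unfolding mk22_def
  apply (simp only: wedge_sum_left[OF finite_lessThan] wedge_sum_right[OF finite_lessThan] wedge_scale_left wedge_scale_right)
  apply (simp only: sum3)
  apply (simp only: wE1S' lt3)
  apply (simp add: L01_def sum3)
  apply (rule ext)
  apply (simp add: field_simps)
  done

lemma Tk_comb_at: "m < 3 \<Longrightarrow> (\<Sum>k<3. d k * E (Tk k) (Tk m)) = d m"
  by (rule comb_at) (auto simp: inj_on_def Tk_inj)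
lemma Tj_comb_at: "m < 3 \<Longrightarrow> (\<Sum>k<3. d k * E (Tj k) (Tj m)) = d m"
  by (rule comb_at) (auto simp: inj_on_def Tj_inj)

lemma comb10_V: "(\<lambda>S. \<Sum>p<3. c p * E {p} S) \<in> V 3 1 0"
  by (rule comb_in_V) (auto dest!: less3)
lemma comb01_V: "(\<lambda>S. \<Sum>p<3. c p * E {3+p} S) \<in> V 3 0 1"
  by (rule comb_in_V) (auto dest!: less3)
lemma combTk_V: "(\<lambda>S. \<Sum>p<3. c p * E (Tk p) S) \<in> V 3 3 2"
  by (rule comb_in_V) (use card_Tk in auto)
lemma combTj_V: "(\<lambda>S. \<Sum>p<3. c p * E (Tj p) S) \<in> V 3 2 3"
  by (rule comb_in_V) (use card_Tj in auto)

lemma Lef10: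
  assumes nd: "\<And>c. (\<forall>k<3. (\<Sum>j<3. c j * K j k) = 0) \<Longrightarrow> (\<forall>j<3. c j = 0)"
  shows "Lefschetz 3 2 1 0 (mk22 K)"
  unfolding Lefschetz_def bij_betw_def
proof (intro conjI)
  show "mk22 K \<in> V 3 2 2" by (rule mk22_in_V)
  show "1 + 0 + 2 = (3::nat)" by simp
  have W: "wedge \<alpha> (mk22 K) = (\<lambda>S. \<Sum>k<3. L10 K (\<lambda>p. \<alpha> {p}) k * E (Tk k) S)" if "\<alpha> \<in> V 3 1 0" for \<alpha>
    by (subst rep10[OF that]) (rule wedge10)
  show "inj_on (\<lambda>\<alpha>. wedge \<alpha> (mk22 K)) (V 3 1 0)"
  proof (rule inj_onI)
    fix \<alpha> \<beta> assume a: "\<alpha> \<in> V 3 1 0" and b: "\<beta> \<in> V 3 1 0" and e: "wedge \<alpha> (mk22 K) = wedge \<beta> (mk22 K)"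
    have LL: "L10 K (\<lambda>p. \<alpha> {p}) m = L10 K (\<lambda>p. \<beta> {p}) m" if "m < 3" for m
      using fun_cong[OF e, of "Tk m"] unfolding W[OF a] W[OF b] Tk_comb_at[OF that] .
    have "\<forall>k<3. (\<Sum>j<3. ((-1)^j * (\<alpha> {j} - \<beta> {j})) * K j k) = 0"
    proof (intro allI impI)
      fix k :: nat assume k: "k < 3"
      have "(\<Sum>j<3. ((-1)^j * (\<alpha> {j} - \<beta> {j})) * K j k) = 
         (\<Sum>j<3. (-1)^j * \<alpha> {j} * K j k) - (\<Sum>j<3. (-1)^j * \<beta> {j} * K j k)"
        by (simp add: sum_subtractf[symmetric] algebra_simps)
      also have "\<dots> = 0" using LL[OF k] unfolding L10_def by simp
      finally show "(\<Sum>j<3. ((-1)^j * (\<alpha> {j} - \<beta> {j})) * K j k) = 0" .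
    qed
    then have "\<forall>j<3. (-1)^j * (\<alpha> {j} - \<beta> {j}) = 0" by (rule nd)
    then have "\<forall>j<3. \<alpha> {j} = \<beta> {j}" by simp
    then show "\<alpha> = \<beta>" by (subst rep10[OF a], subst rep10[OF b]) simp
  qed
  show "(\<lambda>\<alpha>. wedge \<alpha> (mk22 K)) ` V 3 1 0 = V 3 (3 - 0) (3 - 1)"
  proof (intro equalityI subsetI)
    fix x assume "x \<in> (\<lambda>\<alpha>. wedge \<alpha> (mk22 K)) ` V 3 1 0"
    then obtain \<alpha> where a: "\<alpha> \<in> V 3 1 0" "x = wedge \<alpha> (mk22 K)" by auto
    show "x \<in> V 3 (3 - 0) (3 - 1)" unfolding a(2) W[OF a(1)] using combTk_V by simp
  next
    fix \<beta> assume b: "\<beta> \<in> V 3 (3 - 0) (3 - 1)"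
    then have b': "\<beta> \<in> V 3 3 2" by simp
    have "\<exists>c. \<forall>m<3. (\<Sum>j<3. ((-1)^j * K j m / 4) * c j) = \<beta> (Tk m)"
    proof (rule inj_surj3)
      fix c :: "nat \<Rightarrow> complex" assume h: "\<forall>m<3. (\<Sum>j<3. ((-1)^j * K j m / 4) * c j) = 0"
      have "\<forall>k<3. (\<Sum>j<3. ((-1)^j * c j) * K j k) = 0"
      proof (intro allI impI)
        fix k :: nat assume "k < 3"
        then have "(\<Sum>j<3. ((-1)^j * K j k / 4) * c j) = 0" using h by simp
        moreover have "(\<Sum>j<3. ((-1)^j * c j) * K j k) = 4 * (\<Sum>j<3. ((-1)^j * K j k / 4) * c j)"
          by (simp add: sum_distrib_left mult_ac)
        ultimately show "(\<Sum>j<3. ((-1)^j * c j) * K j k) = 0" by simp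
      qed
      then have "\<forall>j<3. (-1)^j * c j = 0" by (rule nd)
      then show "\<forall>j<3. c j = 0" by simp
    qed
    then obtain c where c: "\<forall>m<3. (\<Sum>j<3. ((-1)^j * K j m / 4) * c j) = \<beta> (Tk m)" by blast
    define \<alpha> where "\<alpha> = (\<lambda>S. \<Sum>p<3. c p * E {p} S)"
    have aV: "\<alpha> \<in> V 3 1 0" unfolding \<alpha>_def by (rule comb10_V)
    have "wedge \<alpha> (mk22 K) = (\<lambda>S. \<Sum>k<3. L10 K c k * E (Tk k) S)" unfolding \<alpha>_def by (rule wedge10)
    also have "\<dots> = (\<lambda>S. \<Sum>k<3. \<beta> (Tk k) * E (Tk k) S)"
    proof (rule ext, rule sum.cong[OF refl])
      fix S k assume "k \<in> {..<3::nat}"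
      then have "L10 K c k = \<beta> (Tk k)" using c unfolding L10_def
        by (simp add: sum_divide_distrib algebra_simps)
      then show "L10 K c k * E (Tk k) S = \<beta> (Tk k) * E (Tk k) S" by simp
    qed
    also have "\<dots> = \<beta>" using rep32[OF b'] by simp
    finally show "\<beta> \<in> (\<lambda>\<alpha>. wedge \<alpha> (mk22 K)) ` V 3 1 0" using aV by force
  qed
qed

lemma Lef01:
  assumes nd: "\<And>c. (\<forall>k<3. (\<Sum>j<3. c j * K k j) = 0) \<Longrightarrow> (\<forall>j<3. c j = 0)"
  shows "Lefschetz 3 2 0 1 (mk22 K)"
  unfolding Lefschetz_def bij_betw_def
proof (intro conjI)
  show "mk22 K \<in> V 3 2 2" by (rule mk22_in_V)
  show "0 + 1 + 2 = (3::nat)" by simp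
  have W: "wedge \<alpha> (mk22 K) = (\<lambda>S. \<Sum>k<3. L01 K (\<lambda>p. \<alpha> {3+p}) k * E (Tj k) S)" if "\<alpha> \<in> V 3 0 1" for \<alpha>
    by (subst rep01[OF that]) (rule wedge01)
  show "inj_on (\<lambda>\<alpha>. wedge \<alpha> (mk22 K)) (V 3 0 1)"
  proof (rule inj_onI)
    fix \<alpha> \<beta> assume a: "\<alpha> \<in> V 3 0 1" and b: "\<beta> \<in> V 3 0 1" and e: "wedge \<alpha> (mk22 K) = wedge \<beta> (mk22 K)"
    have LL: "L01 K (\<lambda>p. \<alpha> {3+p}) m = L01 K (\<lambda>p. \<beta> {3+p}) m" if "m < 3" for m
      using fun_cong[OF e, of "Tj m"] unfolding W[OF a] W[OF b] Tj_comb_at[OF that] .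
    have "\<forall>k<3. (\<Sum>j<3. ((-1)^j * (\<alpha> {3+j} - \<beta> {3+j})) * K k j) = 0"
    proof (intro allI impI)
      fix k :: nat assume k: "k < 3"
      have "(\<Sum>j<3. ((-1)^j * (\<alpha> {3+j} - \<beta> {3+j})) * K k j) = 
         (\<Sum>j<3. (-1)^j * \<alpha> {3+j} * K k j) - (\<Sum>j<3. (-1)^j * \<beta> {3+j} * K k j)"
        by (simp add: sum_subtractf[symmetric] algebra_simps)
      also have "\<dots> = 0" using LL[OF k] unfolding L01_def by simp
      finally show "(\<Sum>j<3. ((-1)^j * (\<alpha> {3+j} - \<beta> {3+j})) * K k j) = 0" .
    qed
    then have "\<forall>j<3. (-1)^j * (\<alpha> {3+j} - \<beta> {3+j}) = 0" by (rule nd)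
    then have "\<forall>j<3. \<alpha> {3+j} = \<beta> {3+j}" by simp
    then show "\<alpha> = \<beta>" by (subst rep01[OF a], subst rep01[OF b]) simp
  qed
  show "(\<lambda>\<alpha>. wedge \<alpha> (mk22 K)) ` V 3 0 1 = V 3 (3 - 1) (3 - 0)"
  proof (intro equalityI subsetI)
    fix x assume "x \<in> (\<lambda>\<alpha>. wedge \<alpha> (mk22 K)) ` V 3 0 1"
    then obtain \<alpha> where a: "\<alpha> \<in> V 3 0 1" "x = wedge \<alpha> (mk22 K)" by auto
    show "x \<in> V 3 (3 - 1) (3 - 0)" unfolding a(2) W[OF a(1)] using combTj_V by simp
  next
    fix \<beta> assume b: "\<beta> \<in> V 3 (3 - 1) (3 - 0)"
    then have b': "\<beta> \<in> V 3 2 3" by simp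
    have "\<exists>c. \<forall>m<3. (\<Sum>j<3. ((-1)^j * K m j / 4) * c j) = \<beta> (Tj m)"
    proof (rule inj_surj3)
      fix c :: "nat \<Rightarrow> complex" assume h: "\<forall>m<3. (\<Sum>j<3. ((-1)^j * K m j / 4) * c j) = 0"
      have "\<forall>k<3. (\<Sum>j<3. ((-1)^j * c j) * K k j) = 0"
      proof (intro allI impI)
        fix k :: nat assume "k < 3"
        then have "(\<Sum>j<3. ((-1)^j * K k j / 4) * c j) = 0" using h by simp
        moreover have "(\<Sum>j<3. ((-1)^j * c j) * K k j) = 4 * (\<Sum>j<3. ((-1)^j * K k j / 4) * c j)"
          by (simp add: sum_distrib_left mult_ac)
        ultimately show "(\<Sum>j<3. ((-1)^j * c j) * K k j) = 0" by simp
      qed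
      then have "\<forall>j<3. (-1)^j * c j = 0" by (rule nd)
      then show "\<forall>j<3. c j = 0" by simp
    qed
    then obtain c where c: "\<forall>m<3. (\<Sum>j<3. ((-1)^j * K m j / 4) * c j) = \<beta> (Tj m)" by blast
    define \<alpha> where "\<alpha> = (\<lambda>S. \<Sum>p<3. c p * E {3+p} S)"
    have aV: "\<alpha> \<in> V 3 0 1" unfolding \<alpha>_def by (rule comb01_V)
    have "wedge \<alpha> (mk22 K) = (\<lambda>S. \<Sum>k<3. L01 K c k * E (Tj k) S)" unfolding \<alpha>_def by (rule wedge01)
    also have "\<dots> = (\<lambda>S. \<Sum>k<3. \<beta> (Tj k) * E (Tj k) S)"
    proof (rule ext, rule sum.cong[OF refl])
      fix S k assume "k \<in> {..<3::nat}"
      then have "L01 K c k = \<beta> (Tj k)" using c unfolding L01_def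
        by (simp add: sum_divide_distrib algebra_simps)
      then show "L01 K c k * E (Tj k) S = \<beta> (Tj k) * E (Tj k) S" by simp
    qed
    also have "\<dots> = \<beta>" using rep23[OF b'] by simp
    finally show "\<beta> \<in> (\<lambda>\<alpha>. wedge \<alpha> (mk22 K)) ` V 3 0 1" using aV by force
  qed
qed


definition sesq :: "(nat \<Rightarrow> nat \<Rightarrow> complex) \<Rightarrow> (nat \<Rightarrow> complex) \<Rightarrow> (nat \<Rightarrow> complex) \<Rightarrow> complex" where
  "sesq X x y = (\<Sum>a<3. \<Sum>b<3. x a * X a b * cnj (y b))"
definition GG where
  "GG X Y x1 x2 y1 y2 = sesq X x1 y1 * sesq Y x2 y2 + sesq X x2 y2 * sesq Y x1 y1
     - sesq X x1 y2 * sesq Y x2 y1 - sesq X x2 y1 * sesq Y x1 y2"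
definition minor :: "(nat \<Rightarrow> complex) \<Rightarrow> (nat \<Rightarrow> complex) \<Rightarrow> nat \<Rightarrow> complex" where
  "minor x1 x2 j = x1 (p1 j) * x2 (p2 j) - x1 (p2 j) * x2 (p1 j)"
definition mu :: "(nat \<Rightarrow> complex) \<Rightarrow> (nat \<Rightarrow> complex) \<Rightarrow> nat \<Rightarrow> nat \<Rightarrow> complex" where
  "mu x1 x2 a a' = x1 a * x2 a' - x2 a * x1 a'"
definition Qf :: "(nat \<Rightarrow> nat \<Rightarrow> complex) \<Rightarrow> (nat \<Rightarrow> complex) \<Rightarrow> complex" where
  "Qf K c = (\<Sum>j<3. \<Sum>k<3. c j * cnj (c k) * K j k)"
definition Fq where
  "Fq H u1 u2 = GG (H 0 0) (H 1 1) u1 u2 u1 u2 - GG (H 0 1) (H 1 0) u1 u2 u1 u2"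
definition herm :: "(nat \<Rightarrow> nat \<Rightarrow> nat \<Rightarrow> nat \<Rightarrow> complex) \<Rightarrow> bool" where
  "herm H \<longleftrightarrow> (\<forall>i<2. \<forall>j<2. \<forall>a<3. \<forall>b<3. H i j a b = cnj (H j i b a))"
definition posH :: "(nat \<Rightarrow> nat \<Rightarrow> nat \<Rightarrow> nat \<Rightarrow> complex) \<Rightarrow> bool" where
  "posH H \<longleftrightarrow> (\<forall>\<theta> v. (\<theta> 0 \<noteq> 0 \<or> \<theta> 1 \<noteq> 0) \<longrightarrow> (\<exists>a<3. v a \<noteq> 0) \<longrightarrow>
      0 < Re (\<Sum>i<2. \<Sum>j<2. \<theta> i * cnj (\<theta> j) * sesq (H i j) v v))"

lemma sesq_prod: "sesq X x y * sesq Y x' y' =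
   (\<Sum>a<3. \<Sum>a'<3. \<Sum>b<3. \<Sum>b'<3. X a b * Y a' b' * (x a * x' a') * (cnj (y b) * cnj (y' b')))"
  unfolding sesq_def sum_product
  by (simp add: algebra_simps)

lemma GG_mu: "GG X Y x1 x2 y1 y2 =
   (\<Sum>a<3. \<Sum>a'<3. \<Sum>b<3. \<Sum>b'<3. X a b * Y a' b' * mu x1 x2 a a' * cnj (mu y1 y2 b b'))"
  unfolding GG_def sesq_prod mu_def
  by (simp add: sum_subtractf[symmetric] sum.distrib[symmetric] algebra_simps)

lemma GG_minor: "GG X Y x1 x2 y1 y2 = (\<Sum>j<3. \<Sum>k<3. minor x1 x2 j * cnj (minor y1 y2 k) * Gm X Y j k)"
proof -
  have m: "mu x y a a = 0" "mu x y 1 0 = - mu x y 0 1" "mu x y 2 0 = - mu x y 0 2" "mu x y 2 1 = - mu x y 1 2" for x y a by (simp_all add: mu_def)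
  have mi: "minor x1 x2 j = mu x1 x2 (p1 j) (p2 j)" "minor y1 y2 j = mu y1 y2 (p1 j) (p2 j)" for j
    by (simp_all add: mu_def minor_def)
  show ?thesis unfolding GG_mu mi 
    apply (simp only: sum3 Gm_def p1_def p2_def m)
    apply simp
    by algebra
qed

lemma Fq_Q: "Fq H u1 u2 = Qf (Kmat H) (minor u1 u2)"
  unfolding Fq_def GG_minor Qf_def Kmat_def
  by (simp add: sum_subtractf[symmetric] algebra_simps)


lemma sesq_herm:
  assumes "\<And>a b. a < 3 \<Longrightarrow> b < 3 \<Longrightarrow> X a b = cnj (Y b a)"
  shows "sesq X x y = cnj (sesq Y y x)"
proof -
  have "cnj (sesq Y y x) = (\<Sum>b<3. \<Sum>a<3. cnj (y b) * cnj (Y b a) * x a)"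
    unfolding sesq_def by (simp add: cnj_sum)
  also have "\<dots> = (\<Sum>a<3. \<Sum>b<3. cnj (y b) * cnj (Y b a) * x a)" by (rule sum.swap)
  also have "\<dots> = sesq X x y"
    unfolding sesq_def by (intro sum.cong refl) (simp add: assms mult_ac)
  finally show ?thesis by simp
qed

lemma sesq_lin1: "sesq X (\<lambda>a. s * x a - t * z a) y = s * sesq X x y - t * sesq X z y"
  unfolding sesq_def by (simp add: sum3 algebra_simps)
lemma sesq_lin2: "sesq X x (\<lambda>a. s * y a - t * z a) = cnj s * sesq X x y - cnj t * sesq X x z"
  unfolding sesq_def by (simp add: sum3 algebra_simps)
lemma sesq_zero1: "(\<forall>a<3. x a = 0) \<Longrightarrow> sesq X x y = 0"
  unfolding sesq_def by simp

lemma minor_scale: "minor u1 (\<lambda>b. s * u2 b - t * u1 b) j = s * minor u1 u2 j"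
  unfolding minor_def by algebra
lemma Qf_scale: "Qf K (\<lambda>j. s * c j) = s * cnj s * Qf K c"
  unfolding Qf_def by (simp add: sum_distrib_left algebra_simps)

lemma herm_sesq:
  assumes "herm H" "i < 2" "j < 2"
  shows "sesq (H i j) x y = cnj (sesq (H j i) y x)"
  by (rule sesq_herm) (use assms in \<open>unfold herm_def, blast\<close>)


lemma cmult_cnj_Re: "Re (z * cnj z) = (Re z)^2 + (Im z)^2"
  by (simp add: power2_eq_square)

lemma minfo:
  assumes h: "herm H" and p: "posH H" and v: "\<exists>a<3. v a \<noteq> 0"
  defines "m \<equiv> \<lambda>i j. sesq (H i j) v v"
  shows "Im (m 0 0) = 0" "Im (m 1 1) = 0" "Re (m 0 0) > 0" "Re (m 1 1) > 0"
    "m 1 0 = cnj (m 0 1)" "Re (m 0 0) * Re (m 1 1) > (Re (m 0 1))^2 + (Im (m 0 1))^2"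
proof -
  have mh: "m i j = cnj (m j i)" if "i < 2" "j < 2" for i j
    unfolding m_def using herm_sesq[OF h that] .
  show i0: "Im (m 0 0) = 0" using mh[of 0 0] by (metis cnj.sel(2) neg_equal_zero pos2)
  show i1: "Im (m 1 1) = 0" using mh[of 1 1] by (metis cnj.sel(2) neg_equal_zero one_less_numeral_iff semiring_norm(76))
  show m10: "m 1 0 = cnj (m 0 1)" using mh[of 1 0] by simp
  have P: "0 < Re (\<Sum>i<2. \<Sum>j<2. \<theta> i * cnj (\<theta> j) * m i j)" if "\<theta> 0 \<noteq> 0 \<or> \<theta> 1 \<noteq> 0" for \<theta>
    using p that v unfolding posH_def m_def by blast
  show r0: "Re (m 0 0) > 0" using P[of "\<lambda>i. if i = 0 then 1 else 0"] by (simp add: sum2)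
  show r1: "Re (m 1 1) > 0" using P[of "\<lambda>i. if i = 0 then 0 else 1"] by (simp add: sum2)
  define r where "r = Re (m 1 1)"
  define \<theta> where "\<theta> = (\<lambda>i::nat. if i = 0 then complex_of_real r else - m 0 1)"
  have "\<theta> 0 \<noteq> 0" using r1 unfolding \<theta>_def r_def by simp
  then have "0 < Re (\<Sum>i<2. \<Sum>j<2. \<theta> i * cnj (\<theta> j) * m i j)" using P by blast
  also have "Re (\<Sum>i<2. \<Sum>j<2. \<theta> i * cnj (\<theta> j) * m i j)
      = r * (r * Re (m 0 0) - ((Re (m 0 1))^2 + (Im (m 0 1))^2))"
    using i0 i1 m10 unfolding \<theta>_def sum2 r_def
    by (simp add: algebra_simps power2_eq_square)
  finally have "0 < r * (r * Re (m 0 0) - ((Re (m 0 1))^2 + (Im (m 0 1))^2))" .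
  then have "0 < r * Re (m 0 0) - ((Re (m 0 1))^2 + (Im (m 0 1))^2)"
    using r1 unfolding r_def by (simp add: zero_less_mult_iff)
  then show "Re (m 0 0) * Re (m 1 1) > (Re (m 0 1))^2 + (Im (m 0 1))^2"
    unfolding r_def by (simp add: mult.commute)
qed

lemma key_ineq:
  fixes a1 b1 a2 b2 x1 y1 x2 y2 :: real
  assumes "a1 > 0" "b1 > 0" "a2 > 0" "b2 > 0" "a1 * b1 > x1^2 + y1^2" "a2 * b2 > x2^2 + y2^2"
  shows "a1 * b2 + a2 * b1 > 2 * (x1 * x2 + y1 * y2)"
proof -
  have cs: "(x1 * x2 + y1 * y2)^2 \<le> (x1^2 + y1^2) * (x2^2 + y2^2)"
  proof -
    have "(x1^2 + y1^2) * (x2^2 + y2^2) - (x1 * x2 + y1 * y2)^2 = (x1 * y2 - x2 * y1)^2"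
      by (simp add: power2_eq_square algebra_simps)
    then show ?thesis by (metis diff_ge_0_iff_ge zero_le_power2)
  qed
  have "(x1^2 + y1^2) * (x2^2 + y2^2) < (a1 * b1) * (a2 * b2)"
    using assms by (intro mult_strict_mono) (auto intro: add_nonneg_nonneg)
  also have "\<dots> = (a1 * b2) * (a2 * b1)" by simp
  also have "\<dots> \<le> ((a1 * b2 + a2 * b1) / 2)^2"
  proof -
    have "((a1 * b2 + a2 * b1) / 2)^2 - (a1 * b2) * (a2 * b1) = ((a1 * b2 - a2 * b1) / 2)^2"
      by (simp add: power2_eq_square field_simps)
    then show ?thesis by (metis diff_ge_0_iff_ge zero_le_power2)
  qed
  finally have "(x1 * x2 + y1 * y2)^2 < ((a1 * b2 + a2 * b1) / 2)^2" using cs by linarith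
  moreover have "(a1 * b2 + a2 * b1) / 2 > 0" using assms by (simp add: add_pos_pos)
  ultimately have "\<bar>x1 * x2 + y1 * y2\<bar> < (a1 * b2 + a2 * b1) / 2"
    by (metis abs_of_pos power2_abs power_less_imp_less_base less_imp_le)
  then have "x1 * x2 + y1 * y2 < (a1 * b2 + a2 * b1) / 2" using abs_ge_self order_le_less_trans by blast
  then show ?thesis by (simp add: field_simps)
qed


lemma p12_lt: "p1 j < 3" "p2 j < 3" by (simp_all add: p1_def p2_def)

lemma Fpos:
  assumes h: "herm H" and p: "posH H" and mn: "\<exists>j<3. minor u1 u2 j \<noteq> 0"
  shows "0 < Re (Fq H u1 u2)"
proof -
  have u1nz: "\<exists>a<3. u1 a \<noteq> 0"
  proof (rule ccontr)
    assume "\<not> (\<exists>a<3. u1 a \<noteq> 0)"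
    then have "u1 (p1 j) = 0" "u1 (p2 j) = 0" for j using p12_lt by auto
    then have "minor u1 u2 j = 0" for j unfolding minor_def by simp
    then show False using mn by auto
  qed
  define a1 where "a1 = sesq (H 0 0) u1 u1"
  note m1 = minfo[OF h p u1nz]
  have a1nz: "a1 \<noteq> 0" using m1(3) unfolding a1_def by auto
  define u2' where "u2' = (\<lambda>b. a1 * u2 b - sesq (H 0 0) u2 u1 * u1 b)"
  have mi: "minor u1 u2' = (\<lambda>j. a1 * minor u1 u2 j)"
    unfolding u2'_def by (rule ext) (rule minor_scale)
  have u2nz: "\<exists>a<3. u2' a \<noteq> 0"
  proof (rule ccontr)
    assume "\<not> (\<exists>a<3. u2' a \<noteq> 0)"
    then have "u2' (p1 j) = 0" "u2' (p2 j) = 0" for j using p12_lt by auto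
    then have "minor u1 u2' j = 0" for j unfolding minor_def by simp
    then have "a1 * minor u1 u2 j = 0" for j using mi by metis
    then show False using mn a1nz by auto
  qed
  note m2 = minfo[OF h p u2nz]
  have o1: "sesq (H 0 0) u2' u1 = 0"
    unfolding u2'_def sesq_lin1 a1_def by simp
  have o2: "sesq (H 0 0) u1 u2' = 0"
    using herm_sesq[OF h, of 0 0 u1 u2'] o1 by simp
  have c': "sesq (H 1 0) x y = cnj (sesq (H 0 1) y x)" for x y
    using herm_sesq[OF h, of 1 0 x y] by simp
  define A2 where "A2 = sesq (H 0 0) u2' u2'"
  define B1 where "B1 = sesq (H 1 1) u1 u1"
  define B2 where "B2 = sesq (H 1 1) u2' u2'"
  define C1 where "C1 = sesq (H 0 1) u1 u1"
  define C2 where "C2 = sesq (H 0 1) u2' u2'"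
  define C12 where "C12 = sesq (H 0 1) u1 u2'"
  define C21 where "C21 = sesq (H 0 1) u2' u1"
  have F2: "Fq H u1 u2' = a1 * B2 + A2 * B1 - (C1 * cnj C2 + C2 * cnj C1 - C12 * cnj C12 - C21 * cnj C21)"
    unfolding Fq_def GG_def c' o1 o2
    by (simp add: a1_def A2_def B1_def B2_def C1_def C2_def C12_def C21_def)
  have ReF2: "Re (Fq H u1 u2') = Re a1 * Re B2 + Re A2 * Re B1 - 2 * (Re C1 * Re C2 + Im C1 * Im C2)
      + ((Re C12)^2 + (Im C12)^2) + ((Re C21)^2 + (Im C21)^2)"
    unfolding F2 using m1(1,2) m2(1,2)
    by (simp add: a1_def A2_def B1_def B2_def power2_eq_square algebra_simps)
  have "2 * (Re C1 * Re C2 + Im C1 * Im C2) < Re a1 * Re B2 + Re A2 * Re B1"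
    by (rule key_ineq) (use m1(3,4,6) m2(3,4,6) in \<open>simp_all add: a1_def A2_def B1_def B2_def C1_def C2_def\<close>)
  then have pos2: "0 < Re (Fq H u1 u2')" unfolding ReF2
    by (smt (verit) zero_le_power2)
  have "Fq H u1 u2' = a1 * cnj a1 * Fq H u1 u2"
    unfolding Fq_Q mi Qf_scale ..
  then have "Re (Fq H u1 u2') = ((Re a1)^2 + (Im a1)^2) * Re (Fq H u1 u2)"
    by (simp add: power2_eq_square algebra_simps)
  then show ?thesis using pos2 by (smt (verit) zero_less_mult_iff zero_le_power2)
qed

lemma Qf_cong: "(\<And>j. j < 3 \<Longrightarrow> c j = d j) \<Longrightarrow> Qf K c = Qf K d"
  unfolding Qf_def by (intro sum.cong refl) auto

lemma witness:
  fixes c :: "nat \<Rightarrow> complex"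
  assumes "\<exists>j<3. c j \<noteq> 0"
  shows "\<exists>u1 u2 l. l \<noteq> 0 \<and> (\<forall>j<3. minor u1 u2 j = l * c j)"
proof -
  from assms have "c 0 \<noteq> 0 \<or> c 1 \<noteq> 0 \<or> c 2 \<noteq> 0" by (auto dest!: less3)
  then show ?thesis
  proof (elim disjE)
    assume c: "c 0 \<noteq> 0"
    have "\<forall>j<3. minor (vec3 (c 1 / c 0) 1 0) (vec3 (- c 2 / c 0) 0 1) j = (1 / c 0) * c j"
      unfolding all3 minor_def p1_def p2_def using c by (simp add: field_simps)
    then show ?thesis using c by (intro exI[of _ "1 / c 0"] exI) auto
  next
    assume c: "c 1 \<noteq> 0"
    have "\<forall>j<3. minor (vec3 1 (c 0 / c 1) 0) (vec3 0 (c 2 / c 1) 1) j = (1 / c 1) * c j"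
      unfolding all3 minor_def p1_def p2_def using c by (simp add: field_simps)
    then show ?thesis using c by (intro exI[of _ "1 / c 1"] exI) auto
  next
    assume c: "c 2 \<noteq> 0"
    have "\<forall>j<3. minor (vec3 1 0 (- c 0 / c 2)) (vec3 0 1 (c 1 / c 2)) j = (1 / c 2) * c j"
      unfolding all3 minor_def p1_def p2_def using c by (simp add: field_simps)
    then show ?thesis using c by (intro exI[of _ "1 / c 2"] exI) auto
  qed
qed

lemma Qnd:
  assumes h: "herm H" and p: "posH H" and q: "Qf (Kmat H) c = 0"
  shows "\<forall>j<3. c j = 0"
proof (rule ccontr)
  assume "\<not> (\<forall>j<3. c j = 0)"
  then have "\<exists>j<3. c j \<noteq> 0" by auto
  moreover obtain u1 u2 l where l: "l \<noteq> 0" "\<forall>j<3. minor u1 u2 j = l * c j"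
    using witness[OF calculation] by blast
  ultimately have "\<exists>j<3. minor u1 u2 j \<noteq> 0" by auto
  then have "0 < Re (Fq H u1 u2)" by (rule Fpos[OF h p])
  moreover have "Fq H u1 u2 = Qf (Kmat H) (\<lambda>j. l * c j)"
    unfolding Fq_Q by (rule Qf_cong) (use l in auto)
  ultimately show False unfolding Qf_scale q by simp
qed

lemma nd10:
  assumes h: "herm H" and p: "posH H" and k: "\<forall>k<3. (\<Sum>j<3. c j * Kmat H j k) = 0"
  shows "\<forall>j<3. c j = 0"
proof (rule Qnd[OF h p])
  have "Qf (Kmat H) c = (\<Sum>k<3. cnj (c k) * (\<Sum>j<3. c j * Kmat H j k))"
    unfolding Qf_def by (subst sum.swap) (simp add: sum_distrib_left mult_ac)
  also have "\<dots> = 0" using k by simp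
  finally show "Qf (Kmat H) c = 0" .
qed

lemma nd01:
  assumes h: "herm H" and p: "posH H" and k: "\<forall>k<3. (\<Sum>j<3. c j * Kmat H k j) = 0"
  shows "\<forall>j<3. c j = 0"
proof -
  have "Qf (Kmat H) (\<lambda>j. cnj (c j)) = (\<Sum>j<3. cnj (c j) * (\<Sum>k<3. c k * Kmat H j k))"
    unfolding Qf_def by (simp add: sum_distrib_left mult_ac)
  also have "\<dots> = 0" using k by simp
  finally have "\<forall>j<3. cnj (c j) = 0" by (rule Qnd[OF h p])
  then show ?thesis by simp
qed


lemma swap_inv: "swapidx n (swapidx n i) = i"
  by (auto simp: swapidx_def)

lemma swap_img_eq: "(swapidx n ` S = T) \<longleftrightarrow> (S = swapidx n ` T)"
proof
  assume "swapidx n ` S = T"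
  then have "swapidx n ` T = S" by (auto simp: image_image swap_inv)
  then show "S = swapidx n ` T" by simp
next
  assume "S = swapidx n ` T"
  then show "swapidx n ` S = T" by (auto simp: image_image swap_inv)
qed

lemma E_cnj: "cnj (E T S) = E T S" by (simp add: E_def)

lemma fconj_comb:
  assumes "finite I" "\<And>i. i \<in> I \<Longrightarrow>
     (-1::complex) ^ (card (swapidx n ` T i \<inter> {..<n}) * card (swapidx n ` T i \<inter> {n..<2*n})) = 1"
  shows "fconj n (\<lambda>S. \<Sum>i\<in>I. c i * E (T i) S) = (\<lambda>S. \<Sum>i\<in>I. cnj (c i) * E (swapidx n ` T i) S)"
proof (rule ext)
  fix S
  have e: "E (T i) (swapidx n ` S) = E (swapidx n ` T i) S" for i
    unfolding E_def by (simp add: swap_img_eq)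
  have "fconj n (\<lambda>S. \<Sum>i\<in>I. c i * E (T i) S) S =
      (-1) ^ (card (S \<inter> {..<n}) * card (S \<inter> {n..<2*n})) * (\<Sum>i\<in>I. cnj (c i) * E (swapidx n ` T i) S)"
    unfolding fconj_def e by (simp add: cnj_sum E_cnj)
  also have "\<dots> = (\<Sum>i\<in>I. cnj (c i) * E (swapidx n ` T i) S)"
  proof (cases "\<exists>i\<in>I. S = swapidx n ` T i")
    case True
    then obtain i where "i \<in> I" "S = swapidx n ` T i" by blast
    then show ?thesis using assms(2) by simp
  next
    case False
    then have "(\<Sum>i\<in>I. cnj (c i) * E (swapidx n ` T i) S) = 0"
      by (intro sum.neutral) (auto simp: E_def)
    then show ?thesis by simp
  qed
  finally show "fconj n (\<lambda>S. \<Sum>i\<in>I. c i * E (T i) S) S = (\<Sum>i\<in>I. cnj (c i) * E (swapidx n ` T i) S)" .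
qed

lemma holo1_rep: "holo1 3 a = (\<lambda>S. \<Sum>p<3. a p * E {p} S)"
proof (rule ext)
  fix S
  show "holo1 3 a S = (\<Sum>p<3. a p * E {p} S)"
  proof (cases "is_singleton S \<and> the_elem S < 3")
    case True
    then obtain x where x: "S = {x}" "x < 3" by (auto elim!: is_singletonE)
    have "(\<Sum>p<3. a p * E {p} S) = (\<Sum>p<3. if p = x then a p else 0)"
      by (intro sum.cong refl) (auto simp: E_def x)
    then show ?thesis using x by (simp add: holo1_def)
  next
    case False
    then have "(\<Sum>p<3. a p * E {p} S) = 0"
      using False by (intro sum.neutral) (auto simp: E_def)
    then show ?thesis using False by (auto simp: holo1_def)
  qed
qed

lemma fconj_holo: "fconj 3 (holo1 3 a) = (\<lambda>S. \<Sum>q<3. cnj (a q) * E {3+q} S)"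
proof -
  have "fconj 3 (holo1 3 a) = (\<lambda>S. \<Sum>p<3. cnj (a p) * E (swapidx 3 ` {p}) S)"
    unfolding holo1_rep
    by (rule fconj_comb) (auto simp: swapidx_def)
  also have "\<dots> = (\<lambda>S. \<Sum>q<3. cnj (a q) * E {3+q} S)"
    by (intro ext sum.cong refl) (simp add: swapidx_def add.commute)
  finally show ?thesis .
qed

lemma wedge_holo: "wedge (holo1 3 a) (fconj 3 (holo1 3 b)) = mk11 (\<lambda>p q. - 2 * \<i> * a p * cnj (b q))"
  unfolding fconj_holo unfolding holo1_rep mk11_def
  apply (simp only: wedge_sum_left[OF finite_lessThan] wedge_sum_right[OF finite_lessThan] wedge_scale_left wedge_scale_right)
  apply (simp only: sum3)
  apply (simp only: wE1b lt3)
  apply (rule ext)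
  apply (simp add: field_simps)
  done

lemma Re_mult_cnj: "Re (z * cnj z) = (Re z)^2 + (Im z)^2"
  by (simp add: power2_eq_square)

lemma sum3_sq_zero:
  fixes w :: "nat \<Rightarrow> complex"
  assumes "(\<Sum>l<3. w l * cnj (w l)) = 0"
  shows "\<forall>l<3. w l = 0"
proof -
  have "Re (\<Sum>l<3. w l * cnj (w l)) = (\<Sum>l<3. (Re (w l))^2 + (Im (w l))^2)"
    by (simp add: power2_eq_square)
  then have "(\<Sum>l<3. (Re (w l))^2 + (Im (w l))^2) = 0" using assms by simp
  then have "\<forall>l\<in>{..<3}. (Re (w l))^2 + (Im (w l))^2 = 0"
    by (subst (asm) sum_nonneg_eq_0_iff) auto
  then show ?thesis by (simp add: complex_eq_iff)
qed

lemma sum3_sq_pos: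
  fixes w :: "nat \<Rightarrow> complex"
  assumes "\<exists>l<3. w l \<noteq> 0"
  shows "0 < Re (\<Sum>l<3. w l * cnj (w l))"
proof -
  have "Re (\<Sum>l<3. w l * cnj (w l)) = (\<Sum>l<3. (Re (w l))^2 + (Im (w l))^2)"
    by (simp add: power2_eq_square)
  moreover have "(\<Sum>l<3. (Re (w l))^2 + (Im (w l))^2) \<noteq> 0"
  proof
    assume "(\<Sum>l<3. (Re (w l))^2 + (Im (w l))^2) = 0"
    then have "\<forall>l\<in>{..<3}. (Re (w l))^2 + (Im (w l))^2 = 0"
      by (subst (asm) sum_nonneg_eq_0_iff) auto
    then show False using assms by (auto simp: complex_eq_iff)
  qed
  moreover have "(\<Sum>l<3. (Re (w l))^2 + (Im (w l))^2) \<ge> 0" by (intro sum_nonneg) auto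
  ultimately show ?thesis by linarith
qed

lemma kahler_P:
  assumes "Kahler 3 w"
  obtains P where "w = mk11 P" "\<forall>a<3. \<forall>b<3. P a b = cnj (P b a)"
    "\<forall>v. (\<exists>a<3. v a \<noteq> 0) \<longrightarrow> 0 < Re (sesq P v v)"
proof -
  obtain A :: "nat \<Rightarrow> nat \<Rightarrow> complex" where
    R: "\<forall>c. (\<forall>j<3. (\<Sum>l<3. c l * A l j) = 0) \<longrightarrow> (\<forall>l<3. c l = 0)" and
    wA: "w = (\<lambda>S. \<Sum>l<3. (\<i> / 2) * wedge (holo1 3 (A l)) (fconj 3 (holo1 3 (A l))) S)"
    using assms unfolding Kahler_def by blast
  define P where "P = (\<lambda>a b. \<Sum>l<3. A l a * cnj (A l b))"
  have w: "w = mk11 P"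
    unfolding wA wedge_holo mk11_def P_def
    by (rule ext) (simp add: sum3 field_simps)
  have h: "\<forall>a<3. \<forall>b<3. P a b = cnj (P b a)"
    unfolding P_def by (simp add: cnj_sum mult.commute)
  have pos: "0 < Re (sesq P v v)" if v: "\<exists>a<3. v a \<noteq> 0" for v
  proof -
    define wl where "wl = (\<lambda>l. \<Sum>a<3. A l a * v a)"
    have sP: "sesq P v v = (\<Sum>l<3. wl l * cnj (wl l))"
      unfolding sesq_def P_def wl_def by (simp add: sum3 algebra_simps)
    have "\<exists>l<3. wl l \<noteq> 0"
    proof (rule ccontr)
      assume "\<not> (\<exists>l<3. wl l \<noteq> 0)"
      then have wz: "\<forall>l<3. wl l = 0" by simp
      have "\<exists>c. \<forall>m<3. (\<Sum>j<3. A j m * c j) = cnj (v m)"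
      proof (rule inj_surj3)
        fix c :: "nat \<Rightarrow> complex" assume "\<forall>m<3. (\<Sum>j<3. A j m * c j) = 0"
        then have "\<forall>j<3. (\<Sum>l<3. c l * A l j) = 0" by (simp add: mult.commute)
        then show "\<forall>j<3. c j = 0" using R by blast
      qed
      then obtain c where c: "\<forall>m<3. (\<Sum>j<3. A j m * c j) = cnj (v m)" by blast
      have "(\<Sum>m<3. v m * cnj (v m)) = (\<Sum>m<3. v m * (\<Sum>j<3. A j m * c j))"
        using c by simp
      also have "\<dots> = (\<Sum>j<3. c j * wl j)"
        unfolding wl_def by (simp add: sum3 algebra_simps)
      also have "\<dots> = 0" using wz by simp
      finally have "\<forall>m<3. v m = 0" by (rule sum3_sq_zero)
      then show False using v by auto
    qed
    then show ?thesis unfolding sP by (rule sum3_sq_pos)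
  qed
  show ?thesis using that[OF w h] pos by blast
qed


lemma swap_Sjk: "j < 3 \<Longrightarrow> k < 3 \<Longrightarrow> swapidx 3 ` Sjk j k = Sjk k j"
  by (elim less3[elim_format] disjE) (simp_all add: Sjk_def p1_def p2_def swapidx_def insert_commute)

lemma mk22_prod: "mk22 K = (\<lambda>S. \<Sum>i\<in>{..<3}\<times>{..<3}. (K (fst i) (snd i) / 4) * E (Sjk (fst i) (snd i)) S)"
  unfolding mk22_def by (rule ext) (simp add: sum.cartesian_product split_beta)

lemma fconj_mk22: "fconj 3 (mk22 K) = mk22 (\<lambda>j k. cnj (K k j))"
proof -
  have "fconj 3 (mk22 K) = (\<lambda>S. \<Sum>i\<in>{..<3}\<times>{..<3}. cnj (K (fst i) (snd i) / 4) * E (swapidx 3 ` Sjk (fst i) (snd i)) S)"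
    unfolding mk22_prod
  proof (rule fconj_comb)
    fix i :: "nat \<times> nat" assume "i \<in> {..<3}\<times>{..<3}"
    then have i: "fst i < 3" "snd i < 3" by auto
    show "(-1::complex) ^ (card (swapidx 3 ` Sjk (fst i) (snd i) \<inter> {..<3}) * card (swapidx 3 ` Sjk (fst i) (snd i) \<inter> {3..<2*3})) = 1"
      unfolding swap_Sjk[OF i] using card_Sjk[OF i(2) i(1)] by simp
  qed simp
  also have "\<dots> = (\<lambda>S. \<Sum>j<3. \<Sum>k<3. cnj (K j k / 4) * E (Sjk k j) S)"
  proof -
    have "(\<Sum>i\<in>{..<3}\<times>{..<3}. cnj (K (fst i) (snd i) / 4) * E (swapidx 3 ` Sjk (fst i) (snd i)) S)
       = (\<Sum>i\<in>{..<3}\<times>{..<3}. cnj (K (fst i) (snd i) / 4) * E (Sjk (snd i) (fst i)) S)" for S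
      by (intro sum.cong refl) (auto simp: swap_Sjk)
    then show ?thesis by (simp add: sum.cartesian_product split_beta)
  qed
  also have "\<dots> = mk22 (\<lambda>j k. cnj (K k j))"
    unfolding mk22_def by (rule ext) (subst sum.swap, simp)
  finally show ?thesis .
qed

lemma Kmat_herm:
  assumes h: "herm H" and jk: "j < 3" "k < 3"
  shows "Kmat H j k = cnj (Kmat H k j)"
proof -
  have hh: "\<And>i j a b. i < 2 \<Longrightarrow> j < 2 \<Longrightarrow> a < 3 \<Longrightarrow> b < 3 \<Longrightarrow> H i j a b = cnj (H j i b a)"
    using h unfolding herm_def by blast
  have d: "H i i a b = cnj (H i i b a)" if "i < 2" "b < a" "a < 3" for i a b using hh[of i i a b] that by simp
  have dd: "cnj (H i i a a) = H i i a a" if "i < 2" "a < 3" for i a using hh[of i i a a] that by simp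
  have o: "H i j a b = cnj (H j i b a)" if "j < i" "i < 2" "a < 3" "b < 3" for i j a b using hh[of i j a b] that by simp
  show ?thesis using jk
    by (elim less3[elim_format] disjE; simp add: Kmat_def Gm_def p1_def p2_def d dd o; algebra)
qed

lemma VR_mk22:
  assumes "\<And>j k. j < 3 \<Longrightarrow> k < 3 \<Longrightarrow> K j k = cnj (K k j)"
  shows "mk22 K \<in> VR 3 2"
proof -
  have "mk22 (\<lambda>j k. cnj (K k j)) = mk22 K"
    unfolding mk22_def
  proof (intro ext sum.cong refl)
    fix S j k assume "j \<in> {..<3::nat}" "k \<in> {..<3::nat}"
    then have "cnj (K k j) = K j k" using assms[of j k] by simp
    then show "cnj (K k j) / 4 * E (Sjk j k) S = K j k / 4 * E (Sjk j k) S" by simp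
  qed
  then show ?thesis unfolding VR_def using mk22_in_V fconj_mk22 by simp
qed

lemma sesq_cong: "(\<And>a b. a < 3 \<Longrightarrow> b < 3 \<Longrightarrow> X a b = Y a b) \<Longrightarrow> sesq X x y = sesq Y x y"
  unfolding sesq_def by (intro sum.cong refl) auto

lemma sesq_add: "sesq (\<lambda>a b. X a b + Y a b) v w = sesq X v w + sesq Y v w"
  unfolding sesq_def by (simp add: sum.distrib algebra_simps)
lemma sesq_smult: "sesq (\<lambda>a b. c * X a b) v w = c * sesq X v w"
  unfolding sesq_def by (simp add: sum_distrib_left algebra_simps)

lemma sesq_comb: fixes \<theta> :: "nat \<Rightarrow> complex" shows "sesq (\<lambda>a b. \<Sum>i<2. \<Sum>j<2. \<theta> i * cnj (\<theta> j) * X i j a b) v v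
   = (\<Sum>i<2. \<Sum>j<2. \<theta> i * cnj (\<theta> j) * sesq (X i j) v v)"
  unfolding sum2 by (simp only: sesq_add sesq_smult)


lemma mk11_inf: "infinite S \<Longrightarrow> mk11 X S = 0"
proof -
  assume "infinite S"
  then have "\<And>a b. S \<noteq> {a, 3 + b}" by auto
  then show ?thesis unfolding mk11_def E_def by simp
qed

definition Hm :: "(nat \<Rightarrow> nat \<Rightarrow> form) \<Rightarrow> nat \<Rightarrow> nat \<Rightarrow> nat \<Rightarrow> nat \<Rightarrow> complex" where
  "Hm M = (\<lambda>i j a b. - 2 * \<i> * M i j {a, 3+b})"

lemma G_11: "GriffithsPos 3 M \<Longrightarrow> \<forall>i<2. \<forall>j<2. M i j \<in> V 3 1 1 \<and> M i j = fconj 3 (M j i)"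
  unfolding GriffithsPos_def by (rule conjunct1)

lemma G_rep: "GriffithsPos 3 M \<Longrightarrow> i < 2 \<Longrightarrow> j < 2 \<Longrightarrow> M i j = mk11 (Hm M i j)"
  unfolding Hm_def by (rule rep11) (use G_11 in blast)

lemma G_det:
  assumes "GriffithsPos 3 M"
  shows "det2 M = mk22 (Kmat (Hm M))"
proof -
  have "det2 M = det2 (\<lambda>i j. mk11 (Hm M i j))"
    unfolding det2_def using G_rep[OF assms] by simp
  then show ?thesis by (simp add: det2_mk11)
qed

lemma G_herm:
  assumes g: "GriffithsPos 3 M"
  shows "herm (Hm M)"
  unfolding herm_def
proof (intro allI impI)
  fix i j a b :: nat assume ij: "i < 2" "j < 2" and ab: "a < 3" "b < 3"
  have e: "M i j = fconj 3 (M j i)" using G_11[OF g] ij by blast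
  have sw: "swapidx 3 ` {a, 3+b} = {b, 3+a}" using ab by (auto simp: swapidx_def)
  have c1: "{a, 3+b} \<inter> {..<3} = {a}" "{a, 3+b} \<inter> {3..<2*3} = {3+b}" using ab by auto
  have "M i j {a, 3+b} = - cnj (M j i {b, 3+a})"
    by (subst e) (unfold fconj_def sw c1, simp)
  then show "Hm M i j a b = cnj (Hm M j i b a)" unfolding Hm_def by simp
qed

lemma G_pos:
  assumes g: "GriffithsPos 3 M"
  shows "posH (Hm M)"
  unfolding posH_def
proof (intro allI impI)
  fix \<theta> :: "nat \<Rightarrow> complex" and v :: "nat \<Rightarrow> complex"
  assume th: "\<theta> 0 \<noteq> 0 \<or> \<theta> 1 \<noteq> 0" and v: "\<exists>a<3. v a \<noteq> 0"
  have "Kahler 3 (\<lambda>S. \<Sum>i<2. \<Sum>j<2. \<theta> i * M i j S * cnj (\<theta> j))"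
    using g th unfolding GriffithsPos_def by blast
  then obtain P where P: "(\<lambda>S. \<Sum>i<2. \<Sum>j<2. \<theta> i * M i j S * cnj (\<theta> j)) = mk11 P"
    "\<forall>v. (\<exists>a<3. v a \<noteq> 0) \<longrightarrow> 0 < Re (sesq P v v)"
    by (rule kahler_P) blast
  have Pab: "P a b = (\<Sum>i<2. \<Sum>j<2. \<theta> i * cnj (\<theta> j) * Hm M i j a b)" if "a < 3" "b < 3" for a b
  proof -
    have "\<i>/2 * P a b = (\<Sum>i<2. \<Sum>j<2. \<theta> i * M i j {a, 3+b} * cnj (\<theta> j))"
      using fun_cong[OF P(1), of "{a, 3+b}"] mk11_at[OF that] by simp
    also have "\<dots> = \<i>/2 * (\<Sum>i<2. \<Sum>j<2. \<theta> i * cnj (\<theta> j) * Hm M i j a b)"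
      unfolding Hm_def by (simp add: sum2 algebra_simps)
    finally show ?thesis by simp
  qed
  have "sesq P v v = (\<Sum>i<2. \<Sum>j<2. \<theta> i * cnj (\<theta> j) * sesq (Hm M i j) v v)"
    unfolding sesq_comb[symmetric] by (rule sesq_cong) (simp add: Pab)
  then show "0 < Re (\<Sum>i<2. \<Sum>j<2. \<theta> i * cnj (\<theta> j) * sesq (Hm M i j) v v)"
    using P(2) v by auto
qed


definition Ht :: "(nat \<Rightarrow> nat \<Rightarrow> form) \<Rightarrow> (nat \<Rightarrow> nat \<Rightarrow> complex) \<Rightarrow> real \<Rightarrow> nat \<Rightarrow> nat \<Rightarrow> nat \<Rightarrow> nat \<Rightarrow> complex" where
  "Ht M P t = (\<lambda>i j a b. (1 - complex_of_real t) * Hm M i j a b + complex_of_real t * (if i = j then P a b else 0))"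

lemma Ht_herm:
  assumes h: "herm (Hm M)" and hP: "\<forall>a<3. \<forall>b<3. P a b = cnj (P b a)"
  shows "herm (Ht M P t)"
  unfolding herm_def
proof (intro allI impI)
  fix i j a b :: nat assume ij: "i < 2" "j < 2" and ab: "a < 3" "b < 3"
  have e1': "Hm M i j a b = cnj (Hm M j i b a)" using h ij ab unfolding herm_def by blast
  have e2': "P a b = cnj (P b a)" using hP ab by blast
  note e1 = e1'[symmetric] and e2 = e2'[symmetric]
  show "Ht M P t i j a b = cnj (Ht M P t j i b a)"
    unfolding Ht_def by (simp add: e1 e2)
qed

lemma sesq_lin: "sesq (\<lambda>a b. x * X a b + y * Y a b) v w = x * sesq X v w + y * sesq Y v w"
  by (simp only: sesq_add sesq_smult)

lemma sesq_Ht: "sesq (Ht M P t i j) v v = (1 - complex_of_real t) * sesq (Hm M i j) v v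
    + complex_of_real t * (if i = j then sesq P v v else 0)"
proof (cases "i = j")
  case True
  then show ?thesis unfolding Ht_def by (simp add: sesq_lin)
next
  case False
  then show ?thesis unfolding Ht_def by (simp add: sesq_smult)
qed

lemma Ht_pos:
  assumes p: "posH (Hm M)" and pP: "\<forall>v. (\<exists>a<3. v a \<noteq> 0) \<longrightarrow> 0 < Re (sesq P v v)"
    and t: "0 \<le> t" "t \<le> 1"
  shows "posH (Ht M P t)"
  unfolding posH_def
proof (intro allI impI)
  fix \<theta> :: "nat \<Rightarrow> complex" and v :: "nat \<Rightarrow> complex"
  assume th: "\<theta> 0 \<noteq> 0 \<or> \<theta> 1 \<noteq> 0" and v: "\<exists>a<3. v a \<noteq> 0"
  define S1 where "S1 = (\<Sum>i<2. \<Sum>j<2. \<theta> i * cnj (\<theta> j) * sesq (Hm M i j) v v)"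
  define nr where "nr = (cmod (\<theta> 0))^2 + (cmod (\<theta> 1))^2"
  have S1: "0 < Re S1" using p th v unfolding posH_def S1_def by blast
  have sP: "0 < Re (sesq P v v)" using pP v by blast
  have nr: "0 < nr" using th unfolding nr_def by (auto simp: add_pos_nonneg add_nonneg_pos)
  have "(\<Sum>i<2. \<Sum>j<2. \<theta> i * cnj (\<theta> j) * sesq (Ht M P t i j) v v)
      = (1 - complex_of_real t) * S1 + complex_of_real t * (\<theta> 0 * cnj (\<theta> 0) + \<theta> 1 * cnj (\<theta> 1)) * sesq P v v"
    unfolding S1_def sesq_Ht by (simp add: sum2 algebra_simps)
  also have "\<theta> 0 * cnj (\<theta> 0) + \<theta> 1 * cnj (\<theta> 1) = complex_of_real nr"
    unfolding nr_def of_real_add complex_norm_square ..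
  finally have eq: "Re (\<Sum>i<2. \<Sum>j<2. \<theta> i * cnj (\<theta> j) * sesq (Ht M P t i j) v v)
      = (1 - t) * Re S1 + t * nr * Re (sesq P v v)"
    by simp
  show "0 < Re (\<Sum>i<2. \<Sum>j<2. \<theta> i * cnj (\<theta> j) * sesq (Ht M P t i j) v v)"
  proof (cases "t = 1")
    case True
    then show ?thesis unfolding eq using nr sP by simp
  next
    case False
    then have "0 < (1 - t) * Re S1" using t S1 by simp
    moreover have "0 \<le> t * nr * Re (sesq P v v)" using t nr sP by simp
    ultimately show ?thesis unfolding eq by linarith
  qed
qed


lemma gamma_good:
  assumes h: "herm (Hm M)" and p: "posH (Hm M)" and hP: "\<forall>a<3. \<forall>b<3. P a b = cnj (P b a)"
    and pP: "\<forall>v. (\<exists>a<3. v a \<noteq> 0) \<longrightarrow> 0 < Re (sesq P v v)" and t: "0 \<le> t" "t \<le> 1"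
  shows "mk22 (Kmat (Ht M P t)) \<in> VR 3 2" "Lefschetz 3 2 1 0 (mk22 (Kmat (Ht M P t)))"
    "Lefschetz 3 2 0 1 (mk22 (Kmat (Ht M P t)))"
proof -
  have h': "herm (Ht M P t)" by (rule Ht_herm[OF h hP])
  have p': "posH (Ht M P t)" by (rule Ht_pos[OF p pP t])
  show "mk22 (Kmat (Ht M P t)) \<in> VR 3 2" by (rule VR_mk22) (rule Kmat_herm[OF h'])
  show "Lefschetz 3 2 1 0 (mk22 (Kmat (Ht M P t)))"
    by (rule Lef10) (use nd10[OF h' p'] in blast)
  show "Lefschetz 3 2 0 1 (mk22 (Kmat (Ht M P t)))"
    by (rule Lef01) (use nd01[OF h' p'] in blast)
qed

lemma Ht0: "Ht M P 0 = Hm M" unfolding Ht_def by simp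

lemma Kmat_Ht1: "Kmat (Ht M P 1) = Gm P P"
proof -
  have "Ht M P 1 = (\<lambda>i j. if i = j then P else (\<lambda>a b. 0))" unfolding Ht_def by (auto intro!: ext)
  then show ?thesis unfolding Kmat_def by (auto intro!: ext simp: Gm_def)
qed

lemma wpow2: "wpow (mk11 P) 2 = mk22 (Gm P P)"
proof -
  have "wedge (mk11 P) unitf = mk11 P" by (rule wedge_unit) (rule mk11_inf)
  then show ?thesis by (simp add: numeral_2_eq_2 wedge_mk11)
qed

lemma gamma_cont: "continuous_on {0..1} (\<lambda>t. mk22 (Kmat (Ht M P t)) S)"
proof -
  have c1: "continuous_on {0..1} (\<lambda>t. Ht M P t i j a b)" for i j a b
    unfolding Ht_def by (intro continuous_on_add continuous_on_mult continuous_on_diff continuous_on_const continuous_on_of_real continuous_on_id)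
  have c2: "continuous_on {0..1} (\<lambda>t. Kmat (Ht M P t) j k)" for j k
    unfolding Kmat_def Gm_def by (intro continuous_on_add continuous_on_mult continuous_on_diff c1)
  show ?thesis unfolding mk22_def
    by (intro continuous_on_sum continuous_on_mult continuous_on_divide continuous_on_const c2) simp
qed

theorem mainTheorem8:
  fixes M :: "nat \<Rightarrow> nat \<Rightarrow> form"
  assumes "GriffithsPos 3 M"
  shows "Lefschetz 3 2 1 0 (det2 M) \<and> (\<forall>w. Kahler 3 w \<longrightarrow> HodgeRiemann 3 2 w (det2 M))"
proof -
  note g = assms
  have h: "herm (Hm M)" by (rule G_herm[OF g])
  have p: "posH (Hm M)" by (rule G_pos[OF g])
  have Om: "det2 M = mk22 (Kmat (Hm M))" by (rule G_det[OF g])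
  have L: "Lefschetz 3 2 1 0 (det2 M)"
    unfolding Om by (rule Lef10) (use nd10[OF h p] in blast)
  have HR: "HodgeRiemann 3 2 w (det2 M)" if w: "Kahler 3 w" for w
  proof -
    obtain P where P: "w = mk11 P" "\<forall>a<3. \<forall>b<3. P a b = cnj (P b a)"
      "\<forall>v. (\<exists>a<3. v a \<noteq> 0) \<longrightarrow> 0 < Re (sesq P v v)"
      by (rule kahler_P[OF w]) blast
    define \<gamma> where "\<gamma> = (\<lambda>t. mk22 (Kmat (Ht M P t)))"
    have VR0: "det2 M \<in> VR 3 2" unfolding Om by (rule VR_mk22) (rule Kmat_herm[OF h])
    have unit: "wedge (\<gamma> t) (wpow w 0) = \<gamma> t" for t
      unfolding \<gamma>_def by (simp add: wedge_unit mk22_inf)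
    have path: "\<exists>\<gamma> :: real \<Rightarrow> form.
           (\<forall>S. continuous_on {0..1} (\<lambda>t. \<gamma> t S)) \<and>
           \<gamma> 0 = det2 M \<and> \<gamma> 1 = wpow w 2 \<and>
           (\<forall>t\<in>{0..1}. \<gamma> t \<in> VR 3 2 \<and>
              (\<forall>r \<le> min p q. Lefschetz 3 (2 + 2*r) (p - r) (q - r) (wedge (\<gamma> t) (wpow w (2*r)))))"
      if pq: "p + q + 2 = 3" for p q
    proof (intro exI[of _ \<gamma>] conjI ballI allI impI)
      show "continuous_on {0..1} (\<lambda>t. \<gamma> t S)" for S unfolding \<gamma>_def by (rule gamma_cont)
      show "\<gamma> 0 = det2 M" unfolding \<gamma>_def Ht0 Om ..
      show "\<gamma> 1 = wpow w 2" unfolding \<gamma>_def Kmat_Ht1 P(1) wpow2 ..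
      fix t :: real assume t: "t \<in> {0..1}"
      note gg = gamma_good[OF h p P(2) P(3), of t]
      show "\<gamma> t \<in> VR 3 2" unfolding \<gamma>_def using gg t by simp
      fix r assume r: "r \<le> min p q"
      have r0: "r = 0" using r pq by auto
      have "(p = 1 \<and> q = 0) \<or> (p = 0 \<and> q = 1)" using pq by auto
      then show "Lefschetz 3 (2 + 2*r) (p - r) (q - r) (wedge (\<gamma> t) (wpow w (2*r)))"
        unfolding r0 using gg t unit unfolding \<gamma>_def by auto
    qed
    show ?thesis unfolding HodgeRiemann_def using VR0 path by blast
  qed
  show ?thesis using L HR by blast
qed


end
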